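(* Given an undirected graph $G$ with $n$ nodes, there is an $O(n^2+t)$-time algorithm that lists all the $4$-cycles of $G$, where $t$ is the number of $4$-cycles in $G$.
   Context: Graphs are simple, unweighted and undirected. A $4$-cycle is a cycle on four distinct nodes. "Listing" means outputting every $4$-cycle of the graph. Running time is measured in the standard RAM model with the graph given by adjacency lists. *)

theory Defs
  imports Main
begin

(* A unit-cost word RAM (Cook--Reckhow style random access machine).
   Memory cells are indexed by nat and hold integers; every cell doubles as a
   register.
   The word-size restriction of the standard word RAM is imposed in the main
   theorem by bounding every stored value by a polynomial in n. *)

datatype instr =
    LoadConst nat int
  | Add nat nat nat
  | Sub nat nat nat
  | LoadInd nat nat
  | StoreInd nat nat
  | JumpZero nat nat
  | JumpPos nat nat
  | Goto nat
  | Output nat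
  | Halt

type_synonym prog = "instr list"

record conf =
  pc  :: nat
  mem :: "nat \<Rightarrow> int"
  outp :: "int list"

definition halted :: "prog \<Rightarrow> conf \<Rightarrow> bool" where
  "halted P c \<longleftrightarrow> pc c \<ge> length P \<or> P ! pc c = Halt"

fun exec :: "instr \<Rightarrow> conf \<Rightarrow> conf" where
  "exec (LoadConst i k) c = c\<lparr>pc := Suc (pc c), mem := (mem c)(i := k)\<rparr>"
| "exec (Add i j k) c = c\<lparr>pc := Suc (pc c), mem := (mem c)(i := mem c j + mem c k)\<rparr>"
| "exec (Sub i j k) c = c\<lparr>pc := Suc (pc c), mem := (mem c)(i := mem c j - mem c k)\<rparr>"
| "exec (LoadInd i j) c = c\<lparr>pc := Suc (pc c), mem := (mem c)(i := mem c (nat (mem c j)))\<rparr>"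
| "exec (StoreInd i j) c = c\<lparr>pc := Suc (pc c), mem := (mem c)(nat (mem c i) := mem c j)\<rparr>"
| "exec (JumpZero i l) c = c\<lparr>pc := (if mem c i = 0 then l else Suc (pc c))\<rparr>"
| "exec (JumpPos i l) c = c\<lparr>pc := (if mem c i > 0 then l else Suc (pc c))\<rparr>"
| "exec (Goto l) c = c\<lparr>pc := l\<rparr>"
| "exec (Output i) c = c\<lparr>pc := Suc (pc c), outp := outp c @ [mem c i]\<rparr>"
| "exec Halt c = c"

definition step :: "prog \<Rightarrow> conf \<Rightarrow> conf" where
  "step P c = (if halted P c then c else exec (P ! pc c) c)"

definition valid_adj :: "nat list list \<Rightarrow> bool" where
  "valid_adj adj \<longleftrightarrow>
     (\<forall>v < length adj. distinct (adj ! v) \<and> set (adj ! v) \<subseteq> {..<length adj}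
        \<and> v \<notin> set (adj ! v)) \<and>
     (\<forall>u < length adj. \<forall>v < length adj. u \<in> set (adj ! v) \<longleftrightarrow> v \<in> set (adj ! u))"

definition adj_edge :: "nat list list \<Rightarrow> nat \<Rightarrow> nat \<Rightarrow> bool" where
  "adj_edge adj u v \<longleftrightarrow> v < length adj \<and> u \<in> set (adj ! v)"

(* Memory layout of the input:
   cell 0: n;  cell 1+v: address of the list of v;
   a list is stored as its length followed by its entries. *)
fun list_offsets :: "nat \<Rightarrow> nat list list \<Rightarrow> nat list" where
  "list_offsets a [] = []"
| "list_offsets a (l # ls) = a # list_offsets (a + 1 + length l) ls"

definition encode_adj :: "nat list list \<Rightarrow> int list" where
  "encode_adj adj =
     [int (length adj)] @ map int (list_offsets (1 + length adj) adj)
     @ concat (map (\<lambda>l. int (length l) # map int l) adj)"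

definition init_conf :: "nat list list \<Rightarrow> conf" where
  "init_conf adj = \<lparr>pc = 0,
     mem = (\<lambda>a. if a < length (encode_adj adj) then encode_adj adj ! a else 0),
     outp = []\<rparr>"

definition is_4cycle :: "(nat \<Rightarrow> nat \<Rightarrow> bool) \<Rightarrow> nat \<Rightarrow> nat \<Rightarrow> nat \<Rightarrow> nat \<Rightarrow> bool" where
  "is_4cycle E a b c d \<longleftrightarrow> distinct [a, b, c, d] \<and> E a b \<and> E b c \<and> E c d \<and> E d a"

(* a 4-cycle as a subgraph is identified with its edge set *)
definition cyc_edges :: "nat \<Rightarrow> nat \<Rightarrow> nat \<Rightarrow> nat \<Rightarrow> nat set set" where
  "cyc_edges a b c d = {{a, b}, {b, c}, {c, d}, {d, a}}"

definition four_cycles :: "(nat \<Rightarrow> nat \<Rightarrow> bool) \<Rightarrow> nat set set set" where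
  "four_cycles E = {cyc_edges a b c d | a b c d. is_4cycle E a b c d}"

(* output: consecutive blocks of four integers, each a 4-cycle in cyclic order *)
fun quads :: "int list \<Rightarrow> (int \<times> int \<times> int \<times> int) list" where
  "quads (a # b # c # d # r) = (a, b, c, d) # quads r"
| "quads _ = []"

definition lists_all_4cycles :: "nat list list \<Rightarrow> int list \<Rightarrow> bool" where
  "lists_all_4cycles adj out \<longleftrightarrow>
     4 dvd length out \<and>
     (\<forall>(a, b, c, d) \<in> set (quads out).
        0 \<le> a \<and> 0 \<le> b \<and> 0 \<le> c \<and> 0 \<le> d \<and>
        is_4cycle (adj_edge adj) (nat a) (nat b) (nat c) (nat d)) \<and>
     four_cycles (adj_edge adj) \<subseteq>
        (\<lambda>(a, b, c, d). cyc_edges (nat a) (nat b) (nat c) (nat d)) ` set (quads out)"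

end

theory Submission
  imports Defs
begin

definition offs :: "nat list list \<Rightarrow> nat \<Rightarrow> nat" where
  "offs adj v = 1 + length adj + sum_list (map (\<lambda>l. 1 + length l) (take v adj))"

lemma list_offsets_nth: "v < length ls \<Longrightarrow>
  list_offsets a ls ! v = a + sum_list (map (\<lambda>l. 1 + length l) (take v ls))"
proof (induction ls arbitrary: a v)
  case Nil then show ?case by simp
next
  case (Cons l ls) then show ?case by (cases v) auto
qed

lemma length_list_offsets[simp]: "length (list_offsets a ls) = length ls"
  by (induction ls arbitrary: a) auto

lemma concat_nth_block: "v < length xs \<Longrightarrow> j < length (g (xs ! v)) \<Longrightarrow>
  concat (map g xs) ! (sum_list (map (\<lambda>l. length (g l)) (take v xs)) + j) = g (xs ! v) ! j"
proof (induction xs arbitrary: v)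
  case Nil then show ?case by simp
next
  case (Cons x xs) then show ?case
    by (cases v) (auto simp: nth_append add.assoc)
qed

lemma length_concat_map: "length (concat (map g xs)) = sum_list (map (\<lambda>l. length (g l)) xs)"
  by (induction xs) auto

lemma length_encode: "length (encode_adj adj) = offs adj (length adj)"
  unfolding encode_adj_def offs_def by (simp add: length_concat_map)

lemma encode_nth: assumes "v < length adj" "j \<le> length (adj ! v)"
  shows "encode_adj adj ! (offs adj v + j) = (int (length (adj ! v)) # map int (adj ! v)) ! j"
proof -
  let ?g = "\<lambda>l. int (length l) # map int l"
  have e: "offs adj v + j = (1 + length adj) + (sum_list (map (\<lambda>l. length (?g l)) (take v adj)) + j)"
    unfolding offs_def by simp
  have "concat (map ?g adj) ! (sum_list (map (\<lambda>l. length (?g l)) (take v adj)) + j) = ?g (adj ! v) ! j"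
    using assms by (intro concat_nth_block) auto
  then show ?thesis unfolding encode_adj_def e
    by (simp add: nth_append)
qed

lemma offs_Suc: "v < length adj \<Longrightarrow> offs adj (Suc v) = offs adj v + 1 + length (adj ! v)"
  unfolding offs_def by (simp add: take_Suc_conv_app_nth)

lemma offs_mono: "v \<le> w \<Longrightarrow> w \<le> length adj \<Longrightarrow> offs adj v \<le> offs adj w"
  unfolding offs_def
proof -
  assume "v \<le> w" "w \<le> length adj"
  then obtain d where "w = v + d" by (metis le_iff_add)
  then show "1 + length adj + sum_list (map (\<lambda>l. 1 + length l) (take v adj))
    \<le> 1 + length adj + sum_list (map (\<lambda>l. 1 + length l) (take w adj))"
    by (simp add: take_add)
qed

lemma offs_ge: "offs adj v \<ge> 1 + length adj" unfolding offs_def by simp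

lemma offs_block_lt: "v < w \<Longrightarrow> w \<le> length adj \<Longrightarrow> offs adj v + length (adj ! v) < offs adj w"
proof -
  assume a: "v < w" "w \<le> length adj"
  then have "offs adj (Suc v) \<le> offs adj w" by (intro offs_mono) auto
  with offs_Suc[of v adj] a show ?thesis by simp
qed

definition Lw :: "nat list list \<Rightarrow> nat \<Rightarrow> nat list \<Rightarrow> nat \<Rightarrow> nat list" where
  "Lw adj u vs w = (if w = u then [] else filter (\<lambda>v'. w \<in> set (adj ! v')) vs)"
definition outW where "outW adj u vs v w = map (\<lambda>v'. (u, v', w, v)) (Lw adj u vs w)"
definition outV where "outV adj u vs v = concat (map (outW adj u vs v) (adj ! v))"
definition outU where
  "outU adj u = concat (map (\<lambda>i. outV adj u (take i (adj ! u)) (adj ! u ! i)) [0..<length (adj ! u)])"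
definition outAll where "outAll adj = concat (map (outU adj) [0..<length adj])"

lemma valid_facts:
  assumes "valid_adj adj"
  shows "v < length adj \<Longrightarrow> distinct (adj ! v)"
    and "v < length adj \<Longrightarrow> x \<in> set (adj ! v) \<Longrightarrow> x < length adj"
    and "v < length adj \<Longrightarrow> v \<notin> set (adj ! v)"
    and "u < length adj \<Longrightarrow> v < length adj \<Longrightarrow> u \<in> set (adj ! v) \<longleftrightarrow> v \<in> set (adj ! u)"
  using assms unfolding valid_adj_def by auto

lemma set_outAll: "x \<in> set (outAll adj) \<longleftrightarrow>
  (\<exists>u i w v'. x = (u, v', w, adj ! u ! i) \<and> u < length adj \<and> i < length (adj ! u) \<and>
     w \<in> set (adj ! (adj ! u ! i)) \<and> w \<noteq> u \<and> v' \<in> set (take i (adj ! u)) \<and> w \<in> set (adj ! v'))"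
proof
  assume "x \<in> set (outAll adj)"
  then show "\<exists>u i w v'. x = (u, v', w, adj ! u ! i) \<and> u < length adj \<and> i < length (adj ! u) \<and>
     w \<in> set (adj ! (adj ! u ! i)) \<and> w \<noteq> u \<and> v' \<in> set (take i (adj ! u)) \<and> w \<in> set (adj ! v')"
    unfolding outAll_def outU_def outV_def outW_def Lw_def by (auto split: if_splits)
next
  assume "\<exists>u i w v'. x = (u, v', w, adj ! u ! i) \<and> u < length adj \<and> i < length (adj ! u) \<and>
     w \<in> set (adj ! (adj ! u ! i)) \<and> w \<noteq> u \<and> v' \<in> set (take i (adj ! u)) \<and> w \<in> set (adj ! v')"
  then obtain u i w v' where h: "x = (u, v', w, adj ! u ! i)" "u < length adj" "i < length (adj ! u)"
     "w \<in> set (adj ! (adj ! u ! i))" "w \<noteq> u" "v' \<in> set (take i (adj ! u))" "w \<in> set (adj ! v')"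
    by blast
  have "x \<in> set (outW adj u (take i (adj ! u)) (adj ! u ! i) w)"
    using h unfolding outW_def Lw_def by auto
  then have "x \<in> set (outV adj u (take i (adj ! u)) (adj ! u ! i))"
    using h unfolding outV_def by auto
  then have "x \<in> set (outU adj u)" using h unfolding outU_def by auto
  then show "x \<in> set (outAll adj)" using h unfolding outAll_def by auto
qed

lemma nth_notin_take: "distinct xs \<Longrightarrow> i < length xs \<Longrightarrow> xs ! i \<notin> set (take i xs)"
  by (metis distinct_take id_take_nth_drop not_distinct_conv_prefix)

lemma outAll_sound:
  assumes va: "valid_adj adj" and x: "(a, b, c, d) \<in> set (outAll adj)"
  shows "is_4cycle (adj_edge adj) a b c d"
proof -
  note vf = valid_facts[OF va]
  from x obtain i where h: "a < length adj" "i < length (adj ! a)" "d = adj ! a ! i"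
      "c \<in> set (adj ! d)" "c \<noteq> a" "b \<in> set (take i (adj ! a))" "c \<in> set (adj ! b)"
    unfolding set_outAll by auto
  have dA: "d \<in> set (adj ! a)" using h by simp
  have bA: "b \<in> set (adj ! a)" using h(6) by (meson in_set_takeD)
  have dn: "d < length adj" using vf(2)[OF h(1) dA] .
  have bn: "b < length adj" using vf(2)[OF h(1) bA] .
  have cn: "c < length adj" using vf(2)[OF dn h(4)] .
  have "b \<noteq> d" using nth_notin_take[OF vf(1)[OF h(1)] h(2)] h by auto
  moreover have "a \<noteq> b" using vf(3)[OF h(1)] bA by auto
  moreover have "a \<noteq> d" using vf(3)[OF h(1)] dA by auto
  moreover have "b \<noteq> c" using vf(3)[OF bn] h(7) by auto
  moreover have "c \<noteq> d" using vf(3)[OF dn] h(4) by auto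
  ultimately show ?thesis
    unfolding is_4cycle_def adj_edge_def using h dA bA dn bn cn vf(4)
    by auto
qed

lemma cyc_edges_rev: "cyc_edges a d c b = cyc_edges a b c d"
  unfolding cyc_edges_def by (auto simp: insert_commute)

lemma outAll_complete:
  assumes va: "valid_adj adj" and cy: "is_4cycle (adj_edge adj) a b c d"
  shows "cyc_edges a b c d \<in> (\<lambda>(a, b, c, d). cyc_edges a b c d) ` set (outAll adj)"
proof -
  note vf = valid_facts[OF va]
  from cy have h: "b < length adj" "a \<in> set (adj ! b)" "c < length adj" "b \<in> set (adj ! c)"
    "d < length adj" "c \<in> set (adj ! d)" "a < length adj" "d \<in> set (adj ! a)"
    and dis: "distinct [a, b, c, d]"
    unfolding is_4cycle_def adj_edge_def by auto
  have bA: "b \<in> set (adj ! a)" using vf(4) h by auto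
  have cB: "c \<in> set (adj ! b)" using vf(4) h by auto
  obtain ib where ib: "ib < length (adj ! a)" "adj ! a ! ib = b" using bA by (meson in_set_conv_nth)
  obtain id where id: "id < length (adj ! a)" "adj ! a ! id = d" using h(8) by (meson in_set_conv_nth)
  have "ib \<noteq> id" using ib id dis by auto
  then consider "ib < id" | "id < ib" by linarith
  then show ?thesis
  proof cases
    case 1
    have "b \<in> set (take id (adj ! a))" using ib 1 id
      by (metis in_set_conv_nth length_take min_less_iff_conj nth_take)
    then have "(a, b, c, d) \<in> set (outAll adj)" unfolding set_outAll
      using h cB dis id(1) by (intro exI[of _ a] exI[of _ id] exI[of _ c] exI[of _ b] conjI) (simp_all add: id(2))
    then show ?thesis by (rule rev_image_eqI) simp
  next
    case 2
    have "d \<in> set (take ib (adj ! a))" using ib 2 id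
      by (metis in_set_conv_nth length_take min_less_iff_conj nth_take)
    then have "(a, d, c, b) \<in> set (outAll adj)" unfolding set_outAll
      using h cB dis ib(1) by (intro exI[of _ a] exI[of _ ib] exI[of _ c] exI[of _ d] conjI) (simp_all add: ib(2))
    then have "cyc_edges a d c b \<in> (\<lambda>(a, b, c, d). cyc_edges a b c d) ` set (outAll adj)"
      by (rule rev_image_eqI) simp
    then show ?thesis by (simp add: cyc_edges_rev)
  qed
qed

lemma distinct_concat_map:
  "distinct xs \<Longrightarrow> (\<And>x. x \<in> set xs \<Longrightarrow> distinct (f x)) \<Longrightarrow>
   (\<And>x y. x \<in> set xs \<Longrightarrow> y \<in> set xs \<Longrightarrow> x \<noteq> y \<Longrightarrow> set (f x) \<inter> set (f y) = {}) \<Longrightarrow>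
   distinct (concat (map f xs))"
proof (induction xs)
  case Nil then show ?case by simp
next
  case (Cons a xs)
  have "set (f a) \<inter> set (f y) = {}" if "y \<in> set xs" for y
    using Cons.prems(1) Cons.prems(3)[of a y] that by auto
  then have "set (f a) \<inter> set (concat (map f xs)) = {}" by auto
  with Cons show ?case by simp
qed

lemma outAll_distinct:
  assumes va: "valid_adj adj" shows "distinct (outAll adj)"
proof -
  note vf = valid_facts[OF va]
  have dW: "distinct (outW adj u (take i (adj ! u)) v w)" if "u < length adj" for u i v w
    unfolding outW_def Lw_def using vf(1)[OF that]
    by (auto simp: distinct_map inj_on_def)
  have dV: "distinct (outV adj u (take i (adj ! u)) v)" if "u < length adj" "v < length adj" for u i v
    unfolding outV_def
    apply (rule distinct_concat_map)
    using vf(1)[OF that(2)] dW[OF that(1)] by (auto simp: outW_def)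
  have v4: "snd (snd (snd x)) = v" if "x \<in> set (outV adj u vs v)" for x u vs v
    using that unfolding outV_def outW_def by auto
  have u1: "fst x = u" if "x \<in> set (outU adj u)" for x u
    using that unfolding outU_def outV_def outW_def by auto
  have dU: "distinct (outU adj u)" if u: "u < length adj" for u
    unfolding outU_def
  proof (rule distinct_concat_map)
    fix i assume "i \<in> set [0..<length (adj ! u)]"
    then show "distinct (outV adj u (take i (adj ! u)) (adj ! u ! i))"
      using dV[OF u] vf(2)[OF u] by simp
  next
    fix i j assume ij: "i \<in> set [0..<length (adj ! u)]" "j \<in> set [0..<length (adj ! u)]" "i \<noteq> j"
    then have ne: "adj ! u ! i \<noteq> adj ! u ! j" using vf(1)[OF u] by (simp add: nth_eq_iff_index_eq)
    have False if "x \<in> set (outV adj u (take i (adj ! u)) (adj ! u ! i))"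
      "x \<in> set (outV adj u (take j (adj ! u)) (adj ! u ! j))" for x
      using v4[OF that(1)] v4[OF that(2)] ne by simp
    then show "set (outV adj u (take i (adj ! u)) (adj ! u ! i)) \<inter> set (outV adj u (take j (adj ! u)) (adj ! u ! j)) = {}"
      by blast
  qed simp
  show ?thesis unfolding outAll_def
    apply (rule distinct_concat_map)
    using dU u1 by auto blast
qed

lemma Union_cyc: "\<Union> (cyc_edges a b c d) = {a, b, c, d}"
  unfolding cyc_edges_def by auto

definition T4 :: "nat list list \<Rightarrow> (nat \<times> nat \<times> nat \<times> nat) set" where
  "T4 adj = {(a, b, c, d). is_4cycle (adj_edge adj) a b c d}"

lemma T4_sub: "T4 adj \<subseteq> {..<length adj} \<times> {..<length adj} \<times> {..<length adj} \<times> {..<length adj}"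
  unfolding T4_def is_4cycle_def adj_edge_def by auto

lemma T4_finite: "finite (T4 adj)"
  using T4_sub by (rule finite_subset) auto

lemma card_T4: "card (T4 adj) \<le> 256 * card (four_cycles (adj_edge adj))"
proof -
  let ?f = "\<lambda>(a, b, c, d). cyc_edges a b c d"
  have fc: "four_cycles (adj_edge adj) = ?f ` T4 adj"
    unfolding four_cycles_def T4_def by auto
  have eq: "T4 adj = (\<Union>S\<in>four_cycles (adj_edge adj). {x \<in> T4 adj. ?f x = S})"
    unfolding fc by auto
  have fib: "card {x \<in> T4 adj. ?f x = S} \<le> 256" if Sin: "S \<in> four_cycles (adj_edge adj)" for S
  proof -
    obtain a b c d where S: "S = cyc_edges a b c d" using Sin unfolding four_cycles_def by blast
    let ?V = "{a, b, c, d}"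
    have "{x \<in> T4 adj. ?f x = S} \<subseteq> ?V \<times> ?V \<times> ?V \<times> ?V"
    proof
      fix x assume "x \<in> {x \<in> T4 adj. ?f x = S}"
      then obtain a' b' c' d' where x: "x = (a', b', c', d')" "cyc_edges a' b' c' d' = S" by auto
      have eqV: "{a', b', c', d'} = ?V" by (metis Union_cyc S x(2))
      have m: "a' \<in> ?V" "b' \<in> ?V" "c' \<in> ?V" "d' \<in> ?V" by (simp_all only: eqV[symmetric] insert_iff simp_thms)
      show "x \<in> ?V \<times> ?V \<times> ?V \<times> ?V" unfolding x(1) mem_Times_iff fst_conv snd_conv using m by (intro conjI)
    qed
    then have "card {x \<in> T4 adj. ?f x = S} \<le> card (?V \<times> ?V \<times> ?V \<times> ?V)"
      by (intro card_mono) auto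
    also have "\<dots> = card ?V * (card ?V * (card ?V * card ?V))" by (simp only: card_cartesian_product)
    also have "\<dots> \<le> 4 * (4 * (4 * 4))"
    proof -
      have "card ?V \<le> 4" using card_length[of "[a, b, c, d]"] by simp
      then show ?thesis by (intro mult_le_mono; simp)
    qed
    finally show ?thesis by simp
  qed
  have "card (T4 adj) \<le> (\<Sum>S\<in>four_cycles (adj_edge adj). card {x \<in> T4 adj. ?f x = S})"
    by (subst eq) (rule card_UN_le, simp add: fc T4_finite)
  also have "\<dots> \<le> (\<Sum>S\<in>four_cycles (adj_edge adj). 256)" by (rule sum_mono) (rule fib)
  finally show ?thesis by simp
qed

lemma length_outAll:
  assumes va: "valid_adj adj"
  shows "length (outAll adj) \<le> 256 * card (four_cycles (adj_edge adj))"
proof -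
  have "length (outAll adj) = card (set (outAll adj))"
    using outAll_distinct[OF va] by (simp add: distinct_card)
  also have "\<dots> \<le> card (T4 adj)"
    apply (rule card_mono[OF T4_finite])
    using outAll_sound[OF va] unfolding T4_def by auto
  finally show ?thesis using card_T4 by (rule order.trans)
qed

definition costW where "costW adj u vs w = 30 + 10 * length (Lw adj u vs w)"
definition costV where "costV adj u vs v = 20 + sum_list (map (costW adj u vs) (adj ! v))"
definition costU where
  "costU adj u = 30 + 10 * length adj +
     sum_list (map (\<lambda>i. costV adj u (take i (adj ! u)) (adj ! u ! i)) [0..<length (adj ! u)])"
definition costAll where
  "costAll adj = 50 + 20 * length adj + sum_list (map (costU adj) [0..<length adj])"

lemma sum_list_ind_le1: "distinct xs \<Longrightarrow> sum_list (map (\<lambda>w. if w = u then 1 else 0) xs) \<le> (1::nat)"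
proof (induction xs)
  case Nil then show ?case by simp
next
  case (Cons x xs)
  show ?case
  proof (cases "x = u")
    case True
    then have "sum_list (map (\<lambda>w. if w = u then 1 else 0) xs) = (0::nat)"
      using Cons.prems by (induction xs) auto
    then show ?thesis using True by simp
  qed (use Cons in simp)
qed

lemma deg_le: "valid_adj adj \<Longrightarrow> v < length adj \<Longrightarrow> length (adj ! v) \<le> length adj"
proof -
  assume va: "valid_adj adj" "v < length adj"
  have "length (adj ! v) = card (set (adj ! v))" using valid_facts(1)[OF va] by (simp add: distinct_card)
  also have "\<dots> \<le> card {..<length adj}" using valid_facts(2)[OF va] by (intro card_mono) auto
  finally show ?thesis by simp
qed

lemma sum_list_upt_set: "sum_list (map f [0..<d]) = sum f {..<d}"
  by (metis atLeast0LessThan set_upt sum_set_upt_conv_sum_list_nat)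

lemma sl_cm1: "sum_list (map (\<lambda>x. c * f x) xs) = (c::nat) * sum_list (map f xs)"
  by (induction xs) (auto simp: algebra_simps)
lemma sl_cm2: "sum_list (map (\<lambda>x. f x * c) xs) = (c::nat) * sum_list (map f xs)"
  by (induction xs) (auto simp: algebra_simps)

lemma costU_bound:
  assumes va: "valid_adj adj" and u: "u < length adj"
  shows "costU adj u \<le> 30 + 90 * length adj + 40 * length (outU adj u)"
proof -
  note vf = valid_facts[OF va]
  define n where "n = length adj"
  define d where "d = length (adj ! u)"
  define vi where "vi i = adj ! u ! i" for i
  define L where "L i w = length (Lw adj u (take i (adj ! u)) w)" for i w
  have vin: "vi i < n" "vi i \<in> set (adj ! u)" if "i < d" for i
    using that vf(2)[OF u] unfolding vi_def d_def n_def by auto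
  have Lo: "length (outU adj u) = (\<Sum>i\<leftarrow>[0..<d]. \<Sum>w\<leftarrow>adj ! vi i. L i w)"
    unfolding outU_def outV_def outW_def L_def d_def vi_def
    by (simp add: length_concat comp_def)
  have cU: "costU adj u = 30 + 10 * n + (\<Sum>i\<leftarrow>[0..<d]. 20 + ((\<Sum>w\<leftarrow>adj ! vi i. 30) + (\<Sum>w\<leftarrow>adj ! vi i. 10 * L i w)))"
    unfolding costU_def costV_def costW_def L_def d_def vi_def n_def
    by (simp add: sum_list_addf)
  also have "\<dots> = 30 + 10 * n + 20 * d + 30 * (\<Sum>i\<leftarrow>[0..<d]. length (adj ! vi i)) + 10 * length (outU adj u)"
    unfolding Lo by (simp add: sum_list_addf sl_cm1 sl_cm2 sum_list_triv)
  finally have cU: "costU adj u = 30 + 10 * n + 20 * d + 30 * (\<Sum>i\<leftarrow>[0..<d]. length (adj ! vi i)) + 10 * length (outU adj u)" .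
  define A where "A i w = (if w = u then 1 else 0::nat)" for i w :: nat
  define Bq where "Bq i w = (if w \<noteq> u \<and> L i w = 0 then 1 else 0::nat)" for i w :: nat
  have one: "1 \<le> A i w + Bq i w + L i w" for i w unfolding A_def Bq_def by auto
  have W: "(\<Sum>i\<leftarrow>[0..<d]. length (adj ! vi i)) \<le>
     (\<Sum>i\<leftarrow>[0..<d]. \<Sum>w\<leftarrow>adj ! vi i. A i w) + (\<Sum>i\<leftarrow>[0..<d]. \<Sum>w\<leftarrow>adj ! vi i. Bq i w) + length (outU adj u)"
  proof -
    have "(\<Sum>i\<leftarrow>[0..<d]. length (adj ! vi i)) = (\<Sum>i\<leftarrow>[0..<d]. \<Sum>w\<leftarrow>adj ! vi i. 1)"
      by (simp add: sum_list_triv)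
    also have "\<dots> \<le> (\<Sum>i\<leftarrow>[0..<d]. \<Sum>w\<leftarrow>adj ! vi i. A i w + Bq i w + L i w)"
      by (intro sum_list_mono one)
    also have "\<dots> = (\<Sum>i\<leftarrow>[0..<d]. \<Sum>w\<leftarrow>adj ! vi i. A i w) + (\<Sum>i\<leftarrow>[0..<d]. \<Sum>w\<leftarrow>adj ! vi i. Bq i w) + length (outU adj u)"
      unfolding Lo by (simp add: sum_list_addf)
    finally show ?thesis .
  qed
  have WA: "(\<Sum>i\<leftarrow>[0..<d]. \<Sum>w\<leftarrow>adj ! vi i. A i w) \<le> d"
  proof -
    have "(\<Sum>i\<leftarrow>[0..<d]. \<Sum>w\<leftarrow>adj ! vi i. A i w) \<le> (\<Sum>i\<leftarrow>[0..<d]. 1)"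
      apply (rule sum_list_mono)
      subgoal for i using sum_list_ind_le1[OF vf(1), of "vi i" u] vin[of i] unfolding A_def n_def by simp
      done
    then show ?thesis by (simp add: sum_list_triv)
  qed
  have WB: "(\<Sum>i\<leftarrow>[0..<d]. \<Sum>w\<leftarrow>adj ! vi i. Bq i w) \<le> n"
  proof -
    define S where "S = Sigma {..<d} (\<lambda>i. {w \<in> set (adj ! vi i). w \<noteq> u \<and> L i w = 0})"
    have "(\<Sum>i\<leftarrow>[0..<d]. \<Sum>w\<leftarrow>adj ! vi i. Bq i w) = (\<Sum>i<d. \<Sum>w\<in>set (adj ! vi i). Bq i w)"
      unfolding sum_list_upt_set
      apply (intro sum.cong refl)
      subgoal for i using vf(1)[of "vi i"] vin[of i] unfolding n_def by (simp add: sum.distinct_set_conv_list)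
      done
    also have "\<dots> = (\<Sum>i<d. card {w \<in> set (adj ! vi i). w \<noteq> u \<and> L i w = 0})"
      unfolding Bq_def by (intro sum.cong refl) (simp add: sum.If_cases Int_def)
    also have "\<dots> = card S" unfolding S_def by (subst card_SigmaI) auto
    also have "\<dots> \<le> card {..<n}"
    proof (rule card_inj_on_le[where f = snd])
      show "inj_on snd S"
      proof (rule inj_onI)
        fix x y assume xy: "x \<in> S" "y \<in> S" "snd x = snd y"
        obtain i w where x: "x = (i, w)" by fastforce
        obtain j where y: "y = (j, w)" using xy x by (cases y) auto
        have h: "i < d" "w \<in> set (adj ! vi i)" "w \<noteq> u" "L i w = 0" "j < d" "w \<in> set (adj ! vi j)" "L j w = 0"
          using xy x y unfolding S_def by auto
        have False if "i < j" "i < d" "j < d" "w \<in> set (adj ! vi i)" "w \<noteq> u" "L j w = 0" for i j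
        proof -
          have "vi i \<in> set (take j (adj ! u))" unfolding vi_def using that
            by (metis d_def in_set_conv_nth length_take min_less_iff_conj nth_take)
          then have "vi i \<in> set (filter (\<lambda>v'. w \<in> set (adj ! v')) (take j (adj ! u)))" using that(4) by simp
          then have "filter (\<lambda>v'. w \<in> set (adj ! v')) (take j (adj ! u)) \<noteq> []" by (metis empty_iff list.set(1))
          then show False using that(5,6) unfolding L_def Lw_def by simp
        qed
        then have "i = j" using h by (metis linorder_neqE_nat)
        then show "x = y" using x y by simp
      qed
      show "snd ` S \<subseteq> {..<n}" unfolding S_def using vf(2) vin unfolding n_def by fastforce
    qed simp
    finally show ?thesis by simp
  qed
  have dn: "d \<le> n" unfolding d_def n_def using deg_le[OF va u] .
  show ?thesis unfolding cU n_def[symmetric] using W WA WB dn by linarith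
qed

lemma costAll_bound:
  assumes va: "valid_adj adj"
  shows "costAll adj \<le> 200 * (length adj ^ 2 + length (outAll adj)) + 50"
proof -
  define n where "n = length adj"
  have "sum_list (map (costU adj) [0..<n]) \<le> sum_list (map (\<lambda>u. 30 + 90 * n + 40 * length (outU adj u)) [0..<n])"
    by (rule sum_list_mono) (use costU_bound[OF va] n_def in auto)
  also have "\<dots> = 30 * n + 90 * n * n + 40 * length (outAll adj)"
    unfolding outAll_def n_def by (simp add: sum_list_addf sl_cm1 sl_cm2 sum_list_triv length_concat comp_def)
  finally have s: "sum_list (map (costU adj) [0..<n]) \<le> 30 * n + 90 * n * n + 40 * length (outAll adj)" .
  have nn: "n \<le> n * n" by (cases n) auto
  show ?thesis unfolding costAll_def n_def[symmetric] power2_eq_square distrib_left using s nn by linarith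
qed

definition gcode :: "nat \<Rightarrow> nat \<Rightarrow> prog" where
"gcode b r = [
 Goto (b+3),
 Halt,
 Halt,
 LoadConst (r+3) 0,
 LoadConst (r+4) 1,
 Add (r+5) 0 (r+3),
 Add (r+8) (r+5) (r+4),
 LoadConst (r+9) 0,
 Sub (r+10) (r+5) (r+9),
 JumpPos (r+10) (b+11),
 Goto (b+16),
 LoadInd (r+10) (r+8),
 Add (r+8) (r+8) (r+10),
 Add (r+8) (r+8) (r+4),
 Add (r+9) (r+9) (r+4),
 Goto (b+8),
 LoadConst (r+10) (int (r + 25)),
 Add (r+6) (r+8) (r+10),
 Sub (r+7) (r+6) (r+4),
 Add (r+8) (r+5) (r+4),
 LoadConst (r+9) 0,
 Sub (r+10) (r+5) (r+9),
 JumpPos (r+10) (b+24),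
 Goto (b+31),
 Add (r+11) (r+6) (r+9),
 StoreInd (r+11) (r+8),
 LoadInd (r+10) (r+8),
 Add (r+8) (r+8) (r+10),
 Add (r+8) (r+8) (r+4),
 Add (r+9) (r+9) (r+4),
 Goto (b+21),
 LoadConst (r+12) 0,
 Sub (r+10) (r+5) (r+12),
 JumpPos (r+10) (b+35),
 Goto (b+92),
 LoadConst (r+9) 0,
 Sub (r+10) (r+5) (r+9),
 JumpPos (r+10) (b+39),
 Goto (b+45),
 Add (r+11) (r+6) (r+9),
 LoadInd (r+10) (r+11),
 Add (r+10) (r+10) (r+7),
 StoreInd (r+10) (r+3),
 Add (r+9) (r+9) (r+4),
 Goto (b+36),
 Add (r+11) (r+6) (r+12),
 LoadInd (r+13) (r+11),
 LoadInd (r+10) (r+13),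
 Add (r+14) (r+13) (r+10),
 Add (r+14) (r+14) (r+4),
 Add (r+15) (r+13) (r+4),
 Sub (r+10) (r+14) (r+15),
 JumpPos (r+10) (b+54),
 Goto (b+90),
 LoadInd (r+16) (r+15),
 Add (r+11) (r+6) (r+16),
 LoadInd (r+17) (r+11),
 LoadInd (r+10) (r+17),
 Add (r+18) (r+17) (r+10),
 Add (r+18) (r+18) (r+4),
 Add (r+19) (r+17) (r+4),
 Sub (r+10) (r+18) (r+19),
 JumpPos (r+10) (b+64),
 Goto (b+88),
 LoadInd (r+20) (r+19),
 Sub (r+10) (r+20) (r+12),
 JumpZero (r+10) (b+86),
 Add (r+11) (r+6) (r+20),
 LoadInd (r+21) (r+11),
 Add (r+21) (r+21) (r+7),
 LoadInd (r+22) (r+21),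
 Add (r+23) (r+21) (r+4),
 Add (r+24) (r+23) (r+22),
 Sub (r+10) (r+24) (r+23),
 JumpPos (r+10) (b+76),
 Goto (b+83),
 Output (r+12),
 LoadInd (r+10) (r+23),
 Output (r+10),
 Output (r+20),
 Output (r+16),
 Add (r+23) (r+23) (r+4),
 Goto (b+73),
 StoreInd (r+23) (r+16),
 Add (r+22) (r+22) (r+4),
 StoreInd (r+21) (r+22),
 Add (r+19) (r+19) (r+4),
 Goto (b+61),
 Add (r+15) (r+15) (r+4),
 Goto (b+51),
 Add (r+12) (r+12) (r+4),
 Goto (b+32),
 Halt]"

lemma pcS: "Suc (b + k) = b + Suc k" by simp

lemma length_gcode[simp]: "length (gcode b r) = 93" by (simp add: gcode_def)

definition enc4 :: "(nat \<times> nat \<times> nat \<times> nat) list \<Rightarrow> int list" where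
  "enc4 ts = concat (map (\<lambda>(a, b, c, d). [int a, int b, int c, int d]) ts)"

lemma enc4_append[simp]: "enc4 (xs @ ys) = enc4 xs @ enc4 ys" unfolding enc4_def by simp
lemma enc4_Nil[simp]: "enc4 [] = []" unfolding enc4_def by simp
lemma enc4_Cons[simp]: "enc4 ((a, b, c, d) # xs) = [int a, int b, int c, int d] @ enc4 xs" unfolding enc4_def by simp

locale gm =
  fixes adj :: "nat list list" and P :: prog and b r :: nat and B :: int
  assumes va: "valid_adj adj"
    and code_len: "b + 93 \<le> length P"
    and code: "\<And>i. i < 93 \<Longrightarrow> P ! (b + i) = gcode b r ! i"
    and rpos: "0 < r"
    and rdisj: "r + 25 \<le> length adj + 1 \<or> offs adj (length adj) \<le> r"
    and Bbig: "4 * int (offs adj (length adj) + r + 30) \<le> B"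
begin

abbreviation "n \<equiv> length adj"
abbreviation "E \<equiv> offs adj (length adj)"
abbreviation "off \<equiv> offs adj"
abbreviation "deg v \<equiv> length (adj ! v)"
definition "X = E + r + 25"

definition bnd :: "(nat \<Rightarrow> int) \<Rightarrow> bool" where "bnd m \<longleftrightarrow> (\<forall>a. \<bar>m a\<bar> \<le> B)"
definition runs :: "conf \<Rightarrow> nat \<Rightarrow> conf \<Rightarrow> bool" where
  "runs c k c' \<longleftrightarrow> (step P ^^ k) c = c' \<and> (\<forall>j\<le>k. bnd (mem ((step P ^^ j) c)))"
definition regonly :: "(nat \<Rightarrow> int) \<Rightarrow> (nat \<Rightarrow> int) \<Rightarrow> bool" where
  "regonly m m' \<longleftrightarrow> (\<forall>a. a < r \<or> r + 25 \<le> a \<longrightarrow> m' a = m a)"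

lemma run0: "bnd (mem c) \<Longrightarrow> runs c 0 c" unfolding runs_def by simp

lemma run1: "i < 93 \<Longrightarrow> gcode b r ! i \<noteq> Halt \<Longrightarrow> bnd m \<Longrightarrow>
  runs (exec (gcode b r ! i) \<lparr>pc = b + i, mem = m, outp = oo\<rparr>) k c' \<Longrightarrow>
  runs \<lparr>pc = b + i, mem = m, outp = oo\<rparr> (Suc k) c'"
proof -
  assume a: "i < 93" "gcode b r ! i \<noteq> Halt" "bnd m"
    "runs (exec (gcode b r ! i) \<lparr>pc = b + i, mem = m, outp = oo\<rparr>) k c'"
  let ?c = "\<lparr>pc = b + i, mem = m, outp = oo\<rparr>"
  have st: "step P ?c = exec (gcode b r ! i) ?c"
    unfolding step_def halted_def using a code[of i] code_len by auto
  have fp: "(step P ^^ Suc j) ?c = (step P ^^ j) (step P ?c)" for j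
    by (simp add: funpow_Suc_right del: funpow.simps)
  show ?thesis unfolding runs_def
  proof (intro conjI allI impI)
    show "(step P ^^ Suc k) ?c = c'" using a(4) unfolding runs_def fp st by simp
    fix j assume "j \<le> Suc k"
    then show "bnd (mem ((step P ^^ j) ?c))"
    proof (cases j)
      case 0 then show ?thesis using a(3) by simp
    next
      case (Suc j')
      have "(step P ^^ j) ?c = (step P ^^ j') (exec (gcode b r ! i) ?c)" by (simp only: Suc fp st)
      then show ?thesis using a(4) \<open>j \<le> Suc k\<close> Suc unfolding runs_def by simp
    qed
  qed
qed

lemma run1_0: "gcode b r ! 0 \<noteq> Halt \<Longrightarrow> bnd m \<Longrightarrow>
  runs (exec (gcode b r ! 0) \<lparr>pc = b, mem = m, outp = oo\<rparr>) k c' \<Longrightarrow>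
  runs \<lparr>pc = b, mem = m, outp = oo\<rparr> (Suc k) c'"
  using run1[of 0] by simp

lemma runs_trans: "runs c k1 c1 \<Longrightarrow> runs c1 k2 c2 \<Longrightarrow> runs c (k1 + k2) c2"
  unfolding runs_def
proof (intro conjI allI impI; (elim conjE)?)
  assume a: "(step P ^^ k1) c = c1" "\<forall>j\<le>k1. bnd (mem ((step P ^^ j) c))"
     "(step P ^^ k2) c1 = c2" "\<forall>j\<le>k2. bnd (mem ((step P ^^ j) c1))"
  show "(step P ^^ (k1 + k2)) c = c2" using a by (simp add: funpow_add add.commute[of k1])
  fix j assume j: "j \<le> k1 + k2"
  show "bnd (mem ((step P ^^ j) c))"
  proof (cases "j \<le> k1")
    case True then show ?thesis using a by simp
  next
    case False
    have jj: "j = (j - k1) + k1" using False by simp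
    have "(step P ^^ ((j - k1) + k1)) c = (step P ^^ (j - k1)) ((step P ^^ k1) c)"
      by (simp only: funpow_add o_apply)
    then have "(step P ^^ j) c = (step P ^^ (j - k1)) c1"
      using a(1) jj by simp
    then show ?thesis using a(4) j False by simp
  qed
qed

lemma bnd_upd[simp]: "bnd m \<Longrightarrow> bnd (m(a := v)) = (\<bar>v\<bar> \<le> B)"
  unfolding bnd_def by (auto simp: fun_upd_apply)

definition runsF :: "conf \<Rightarrow> nat \<Rightarrow> conf \<Rightarrow> bool" where
  "runsF c k c' \<longleftrightarrow> (bnd (mem c) \<longrightarrow> runs c k c')"

lemma runF0: "runsF c 0 c" unfolding runsF_def runs_def by simp

fun wok :: "instr \<Rightarrow> conf \<Rightarrow> bool" where
  "wok (LoadConst i k) c = (\<bar>k\<bar> \<le> B)"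
| "wok (Add i j k) c = (\<bar>mem c j + mem c k\<bar> \<le> B)"
| "wok (Sub i j k) c = (\<bar>mem c j - mem c k\<bar> \<le> B)"
| "wok _ c = True"

lemma wok_bnd: "bnd (mem c) \<Longrightarrow> wok ins c \<Longrightarrow> bnd (mem (exec ins c))"
  by (cases ins) (auto simp: bnd_def)

lemma runF1: "i < 93 \<Longrightarrow> gcode b r ! i \<noteq> Halt \<Longrightarrow>
  wok (gcode b r ! i) \<lparr>pc = b + i, mem = m, outp = oo\<rparr> \<Longrightarrow>
  runsF (exec (gcode b r ! i) \<lparr>pc = b + i, mem = m, outp = oo\<rparr>) k c' \<Longrightarrow>
  runsF \<lparr>pc = b + i, mem = m, outp = oo\<rparr> (Suc k) c'"
  unfolding runsF_def using run1 wok_bnd by fastforce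

lemma runF1_0: "gcode b r ! 0 \<noteq> Halt \<Longrightarrow>
  wok (gcode b r ! 0) \<lparr>pc = b, mem = m, outp = oo\<rparr> \<Longrightarrow>
  runsF (exec (gcode b r ! 0) \<lparr>pc = b, mem = m, outp = oo\<rparr>) k c' \<Longrightarrow>
  runsF \<lparr>pc = b, mem = m, outp = oo\<rparr> (Suc k) c'"
  using runF1[of 0] by simp

lemma runs_bnd_end: "runs c k c' \<Longrightarrow> bnd (mem c')"
  unfolding runs_def by auto

lemma runsF_trans: "runsF c k1 c1 \<Longrightarrow> runsF c1 k2 c2 \<Longrightarrow> runsF c (k1 + k2) c2"
  unfolding runsF_def using runs_trans runs_bnd_end by blast

lemma runsF_trans_le: "runsF c k1 c1 \<Longrightarrow> runsF c1 k2 c2 \<Longrightarrow> k1 \<le> a \<Longrightarrow> k2 \<le> d \<Longrightarrow>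
   \<exists>k. runsF c k c2 \<and> k \<le> a + d"
  using runsF_trans by (intro exI[of _ "k1 + k2"]) auto

lemma conf_eta: "(c::conf) = \<lparr>pc = pc c, mem = mem c, outp = outp c\<rparr>" by (cases c) simp

lemma loop_gen:
  assumes body: "\<And>i c. i < N \<Longrightarrow> Inv i c \<Longrightarrow> \<exists>k c'. runsF c k c' \<and> k \<le> cost i \<and> Inv (Suc i) c'"
    and "Inv i0 c0" "i0 \<le> N"
  shows "\<exists>k c'. runsF c0 k c' \<and> k \<le> (\<Sum>i\<leftarrow>[i0..<N]. cost i) \<and> Inv N c'"
  using assms(2,3)
proof (induction "N - i0" arbitrary: i0 c0)
  case 0 then have "i0 = N" by simp
  then show ?case using 0 runF0 by (intro exI[of _ 0] exI[of _ c0]) auto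
next
  case (Suc t)
  then have lt: "i0 < N" by simp
  obtain k1 c1 where 1: "runsF c0 k1 c1" "k1 \<le> cost i0" "Inv (Suc i0) c1"
    using body[OF lt Suc.prems(1)] by blast
  have t: "t = N - Suc i0" using Suc.hyps(2) by arith
  obtain k2 c2 where 2: "runsF c1 k2 c2" "k2 \<le> (\<Sum>i\<leftarrow>[Suc i0..<N]. cost i)" "Inv N c2"
    using Suc.hyps(1)[OF t 1(3)] lt by auto
  have "[i0..<N] = i0 # [Suc i0..<N]" using lt by (simp add: upt_conv_Cons)
  then show ?case using 1 2 runsF_trans[OF 1(1) 2(1)] by (intro exI[of _ "k1 + k2"] exI[of _ c2]) auto
qed

lemma regonly_refl[simp]: "regonly m m" unfolding regonly_def by simp
lemma regonly_trans: "regonly m1 m2 \<Longrightarrow> regonly m2 m3 \<Longrightarrow> regonly m1 m3"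
  unfolding regonly_def by auto
lemma regonly_upd[simp]: "i < 25 \<Longrightarrow> regonly m (m'(r + i := v)) = regonly m m'"
  unfolding regonly_def by auto


definition notreg :: "nat \<Rightarrow> bool" where "notreg a \<longleftrightarrow> a < r \<or> r + 25 \<le> a"

lemma notreg_ne[simp]: "notreg a \<Longrightarrow> i < 25 \<Longrightarrow> (a = r + i) = False"
  "notreg a \<Longrightarrow> i < 25 \<Longrightarrow> (r + i = a) = False"
  unfolding notreg_def by auto

lemma off_lt_E: "v < n \<Longrightarrow> j \<le> deg v \<Longrightarrow> off v + j < E"
  using offs_block_lt[of v n adj] by simp
lemma off_ge_n: "n < off v" using offs_ge[of adj v] by simp
lemma n_lt_E: "n < E" using off_ge_n .
lemma off0: "off 0 = n + 1" unfolding offs_def by simp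
lemma notreg_data: "v < n \<Longrightarrow> j \<le> deg v \<Longrightarrow> notreg (off v + j)"
  unfolding notreg_def using rdisj off_lt_E[of v j] off_ge_n[of v] by auto
lemma notreg_X: "X \<le> a \<Longrightarrow> notreg a" unfolding notreg_def X_def by auto
lemma notreg_Xv: "notreg (X + v)" using notreg_X by simp
lemma notreg_0: "notreg 0" unfolding notreg_def using rpos by auto

definition "Dn = E + r + 24"
abbreviation "sh w \<equiv> off w + Dn"
lemma X_pos: "X = Dn + 1" unfolding X_def Dn_def by simp
lemma intXm1[simp]: "int X - 1 = int Dn" unfolding X_def Dn_def by simp
lemma sh_ge: "w < n \<Longrightarrow> X + n \<le> sh w + k" using off_ge_n[of w] X_pos by simp
lemma sh_lt: "w < n \<Longrightarrow> k \<le> deg w \<Longrightarrow> sh w + k < E + Dn" using off_lt_E[of w k] by simp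
lemma notreg_sh: "w < n \<Longrightarrow> notreg (sh w + k)" using sh_ge[of w k] notreg_X by simp

lemma block_inj: "w < n \<Longrightarrow> w' < n \<Longrightarrow> j \<le> deg w \<Longrightarrow> j' \<le> deg w' \<Longrightarrow> off w + j = off w' + j' \<Longrightarrow> w = w' \<and> j = j'"
proof -
  assume a: "w < n" "w' < n" "j \<le> deg w" "j' \<le> deg w'" "off w + j = off w' + j'"
  have "\<not> w < w'" using offs_block_lt[of w w' adj] a by auto
  moreover have "\<not> w' < w" using offs_block_lt[of w' w adj] a by auto
  ultimately show ?thesis using a by auto
qed

definition dat :: "(nat \<Rightarrow> int) \<Rightarrow> bool" where
  "dat m \<longleftrightarrow> (\<forall>v<n. m (off v) = int (deg v) \<and> (\<forall>j<deg v. m (off v + 1 + j) = int (adj ! v ! j)))"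
definition offt :: "(nat \<Rightarrow> int) \<Rightarrow> bool" where
  "offt m \<longleftrightarrow> (\<forall>v<n. m (X + v) = int (off v))"
definition shad :: "(nat \<Rightarrow> int) \<Rightarrow> (nat \<Rightarrow> nat list) \<Rightarrow> bool" where
  "shad m Ls \<longleftrightarrow> (\<forall>w<n. length (Ls w) \<le> deg w \<and> m (sh w) = int (length (Ls w)) \<and>
      (\<forall>k<length (Ls w). m (sh w + 1 + k) = int (Ls w ! k)))"
definition agree :: "(nat \<Rightarrow> int) \<Rightarrow> (nat \<Rightarrow> int) \<Rightarrow> bool" where
  "agree m m' \<longleftrightarrow> (\<forall>a. notreg a \<longrightarrow> m' a = m a)"

lemma agree_refl[simp]: "agree m m" unfolding agree_def by simp
lemma agree_trans: "agree m1 m2 \<Longrightarrow> agree m2 m3 \<Longrightarrow> agree m1 m3" unfolding agree_def by auto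
lemma agree_reg[simp]: "i < 25 \<Longrightarrow> agree m (m'(r + i := v)) = agree m m'"
  unfolding agree_def by auto

lemma dat_agree: "agree m m' \<Longrightarrow> dat m \<Longrightarrow> dat m'"
  unfolding dat_def agree_def
proof (intro allI impI conjI)
  fix v j assume a: "\<forall>a. notreg a \<longrightarrow> m' a = m a"
    "\<forall>v<n. m (off v) = int (deg v) \<and> (\<forall>j<deg v. m (off v + 1 + j) = int (adj ! v ! j))" "v < n"
  show "m' (off v) = int (deg v)" using a notreg_data[of v 0] by simp
  assume "j < deg v"
  then show "m' (off v + 1 + j) = int (adj ! v ! j)" using a notreg_data[of v "1 + j"] by (simp add: add.assoc)
qed
lemma offt_agree: "agree m m' \<Longrightarrow> offt m \<Longrightarrow> offt m'"
  unfolding offt_def agree_def using notreg_Xv by simp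
lemma shad_agree: "agree m m' \<Longrightarrow> shad m Ls \<Longrightarrow> shad m' Ls"
  unfolding shad_def agree_def
proof (intro allI impI conjI)
  fix w k assume a: "\<forall>a. notreg a \<longrightarrow> m' a = m a" "\<forall>w<n. length (Ls w) \<le> deg w \<and> m (sh w) = int (length (Ls w)) \<and>
      (\<forall>k<length (Ls w). m (sh w + 1 + k) = int (Ls w ! k))" "w < n"
  show "length (Ls w) \<le> deg w" using a by simp
  show "m' (sh w) = int (length (Ls w))" using a notreg_sh[of w 0] by simp
  assume "k < length (Ls w)"
  then show "m' (sh w + 1 + k) = int (Ls w ! k)" using a notreg_sh[of w "1 + k"] by (simp add: add.assoc)
qed

lemma datD: "dat m \<Longrightarrow> v < n \<Longrightarrow> m (off v) = int (deg v)"
  "dat m \<Longrightarrow> v < n \<Longrightarrow> j < deg v \<Longrightarrow> m (off v + 1 + j) = int (adj ! v ! j)"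
  unfolding dat_def by auto
lemma offtD: "offt m \<Longrightarrow> v < n \<Longrightarrow> m (X + v) = int (off v)" unfolding offt_def by auto

lemma vf: "v < n \<Longrightarrow> distinct (adj ! v)" "v < n \<Longrightarrow> x \<in> set (adj ! v) \<Longrightarrow> x < n"
    "v < n \<Longrightarrow> v \<notin> set (adj ! v)" "u < n \<Longrightarrow> v < n \<Longrightarrow> u \<in> set (adj ! v) \<longleftrightarrow> v \<in> set (adj ! u)"
  using valid_facts(1)[OF va, of v] valid_facts(2)[OF va, of v x] valid_facts(3)[OF va, of v]
    valid_facts(4)[OF va, of u v] by simp_all

lemma E_le_X: "E + 25 \<le> X" unfolding X_def by simp

lemma dat_reg[simp]: "i < 25 \<Longrightarrow> dat (m(r + i := v)) = dat m"
  using dat_agree[of m "m(r + i := v)"] dat_agree[of "m(r + i := v)" m] unfolding agree_def by auto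
lemma offt_reg[simp]: "i < 25 \<Longrightarrow> offt (m(r + i := v)) = offt m"
  using offt_agree[of m "m(r + i := v)"] offt_agree[of "m(r + i := v)" m] unfolding agree_def by auto
lemma shad_reg[simp]: "i < 25 \<Longrightarrow> shad (m(r + i := v)) Ls = shad m Ls"
  using shad_agree[of m "m(r + i := v)"] shad_agree[of "m(r + i := v)" m] unfolding agree_def by auto
lemma dat_X[simp]: "dat (m(X + j := x)) = dat m"
proof -
  have ne: "off v + k \<noteq> X + j" if "v < n" "k \<le> deg v" for v k using off_lt_E[OF that] E_le_X by simp
  have ne0: "off v \<noteq> X + j" if "v < n" for v using ne[OF that, of 0] by simp
  have ne1: "off v + 1 + k \<noteq> X + j" if "v < n" "k < deg v" for v k using ne[OF that(1), of "1+k"] that(2) by (simp add: add.assoc)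
  show ?thesis unfolding dat_def using ne0 ne1 by auto
qed
lemma X_ne_data: "v < n \<Longrightarrow> j \<le> deg v \<Longrightarrow> (off v + j = X + i) = False"
  using off_lt_E[of v j] E_le_X by auto
lemma natii[simp]: "nat (int a + int c) = a + c" by simp

lemma entry:
  assumes "m 0 = int n"
  shows "\<exists>k m'. runsF \<lparr>pc = b+3, mem = m, outp = oo\<rparr> k \<lparr>pc = b+8, mem = m', outp = oo\<rparr> \<and> k \<le> 5
    \<and> agree m m' \<and> m' (r+3) = 0 \<and> m' (r+4) = 1 \<and> m' (r+5) = int n
    \<and> m' (r+9) = int 0 \<and> m' (r+8) = int (off 0)"
proof -
  note Bb = Bbig n_lt_E off0
  show ?thesis
    using assms Bb
    apply (intro exI conjI)
    apply (rule runF1[where i=3])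
     apply simp
    apply (simp add: gcode_def)
   apply (simp add: gcode_def pcS abs_le_iff del: add_Suc_right)
  apply (simp add: gcode_def pcS del: add_Suc_right)
    apply (rule runF1[where i=4])
     apply simp
    apply (simp add: gcode_def)
   apply (simp add: gcode_def pcS abs_le_iff del: add_Suc_right)
  apply (simp add: gcode_def pcS del: add_Suc_right)
    apply (rule runF1[where i=5])
     apply simp
    apply (simp add: gcode_def)
   apply (simp add: gcode_def pcS abs_le_iff del: add_Suc_right)
  apply (simp add: gcode_def pcS del: add_Suc_right)
    apply (rule runF1[where i=6])
     apply simp
    apply (simp add: gcode_def)
   apply (simp add: gcode_def pcS abs_le_iff del: add_Suc_right)
  apply (simp add: gcode_def pcS del: add_Suc_right)
    apply (rule runF1[where i=7])
     apply simp
    apply (simp add: gcode_def)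
   apply (simp add: gcode_def pcS abs_le_iff del: add_Suc_right)
  apply (simp add: gcode_def pcS del: add_Suc_right)
    apply (rule runF0)
    apply simp_all
    done
qed

lemma pass1_body:
  assumes "i < n" "m (r+3) = 0" "m (r+4) = 1" "m (r+5) = int n" "m (r+9) = int i" "m (r+8) = int p"
    "p = off i" "m p = int d" "d = deg i"
  shows "\<exists>k m'. runsF \<lparr>pc = b+8, mem = m, outp = oo\<rparr> k \<lparr>pc = b+8, mem = m', outp = oo\<rparr> \<and> k \<le> 7
    \<and> agree m m' \<and> m' (r+3) = 0 \<and> m' (r+4) = 1 \<and> m' (r+5) = int n
    \<and> m' (r+9) = int (i+1) \<and> m' (r+8) = int (off (i+1))"
proof -
  have np: "notreg p" using notreg_data[of i 0] assms by simp
  have pd: "p + d < E" using off_lt_E[of i d] assms by simp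
  have ofs: "off (i+1) = p + d + 1" using offs_Suc[of i adj] assms by simp
  note Bb = Bbig n_lt_E
  show ?thesis
    using assms np pd Bb ofs
    apply (intro exI conjI)
    apply (rule runF1[where i=8])
     apply simp
    apply (simp add: gcode_def)
   apply (simp add: gcode_def pcS abs_le_iff del: add_Suc_right)
  apply (simp add: gcode_def pcS del: add_Suc_right)
    apply (rule runF1[where i=9])
     apply simp
    apply (simp add: gcode_def)
   apply (simp add: gcode_def pcS abs_le_iff del: add_Suc_right)
  apply (simp add: gcode_def pcS del: add_Suc_right)
    apply (rule runF1[where i=11])
     apply simp
    apply (simp add: gcode_def)
   apply (simp add: gcode_def pcS abs_le_iff del: add_Suc_right)
  apply (simp add: gcode_def pcS del: add_Suc_right)
    apply (rule runF1[where i=12])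
     apply simp
    apply (simp add: gcode_def)
   apply (simp add: gcode_def pcS abs_le_iff del: add_Suc_right)
  apply (simp add: gcode_def pcS del: add_Suc_right)
    apply (rule runF1[where i=13])
     apply simp
    apply (simp add: gcode_def)
   apply (simp add: gcode_def pcS abs_le_iff del: add_Suc_right)
  apply (simp add: gcode_def pcS del: add_Suc_right)
    apply (rule runF1[where i=14])
     apply simp
    apply (simp add: gcode_def)
   apply (simp add: gcode_def pcS abs_le_iff del: add_Suc_right)
  apply (simp add: gcode_def pcS del: add_Suc_right)
    apply (rule runF1[where i=15])
     apply simp
    apply (simp add: gcode_def)
   apply (simp add: gcode_def pcS abs_le_iff del: add_Suc_right)
  apply (simp add: gcode_def pcS del: add_Suc_right)
    apply (rule runF0)
    apply simp_all
    done
qed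

lemma pass1_exit:
  assumes "m (r+3) = 0" "m (r+4) = 1" "m (r+5) = int n" "m (r+9) = int n" "m (r+8) = int E"
  shows "\<exists>k m'. runsF \<lparr>pc = b+8, mem = m, outp = oo\<rparr> k \<lparr>pc = b+21, mem = m', outp = oo\<rparr> \<and> k \<le> 8
    \<and> agree m m' \<and> m' (r+3) = 0 \<and> m' (r+4) = 1 \<and> m' (r+5) = int n
    \<and> m' (r+6) = int X \<and> m' (r+7) = int Dn \<and> m' (r+9) = int 0 \<and> m' (r+8) = int (off 0)"
proof -
  note Bb = Bbig n_lt_E off0
  show ?thesis
    using assms Bb
    apply (intro exI conjI)
    apply (rule runF1[where i=8])
     apply simp
    apply (simp add: gcode_def)
   apply (simp add: gcode_def pcS abs_le_iff del: add_Suc_right)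
  apply (simp add: gcode_def pcS del: add_Suc_right)
    apply (rule runF1[where i=9])
     apply simp
    apply (simp add: gcode_def)
   apply (simp add: gcode_def pcS abs_le_iff del: add_Suc_right)
  apply (simp add: gcode_def pcS del: add_Suc_right)
    apply (rule runF1[where i=10])
     apply simp
    apply (simp add: gcode_def)
   apply (simp add: gcode_def pcS abs_le_iff del: add_Suc_right)
  apply (simp add: gcode_def pcS del: add_Suc_right)
    apply (rule runF1[where i=16])
     apply simp
    apply (simp add: gcode_def)
   apply (simp add: gcode_def pcS abs_le_iff del: add_Suc_right)
  apply (simp add: gcode_def pcS del: add_Suc_right)
    apply (rule runF1[where i=17])
     apply simp
    apply (simp add: gcode_def)
   apply (simp add: gcode_def pcS abs_le_iff del: add_Suc_right)
  apply (simp add: gcode_def pcS del: add_Suc_right)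
    apply (rule runF1[where i=18])
     apply simp
    apply (simp add: gcode_def)
   apply (simp add: gcode_def pcS abs_le_iff del: add_Suc_right)
  apply (simp add: gcode_def pcS del: add_Suc_right)
    apply (rule runF1[where i=19])
     apply simp
    apply (simp add: gcode_def)
   apply (simp add: gcode_def pcS abs_le_iff del: add_Suc_right)
  apply (simp add: gcode_def pcS del: add_Suc_right)
    apply (rule runF1[where i=20])
     apply simp
    apply (simp add: gcode_def)
   apply (simp add: gcode_def pcS abs_le_iff del: add_Suc_right)
  apply (simp add: gcode_def pcS del: add_Suc_right)
    apply (rule runF0)
    apply (simp_all add: X_def Dn_def)
    done
qed

lemma pass2_body:
  assumes "i < n" "m (r+3) = 0" "m (r+4) = 1" "m (r+5) = int n" "m (r+9) = int i" "m (r+8) = int p"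
    "m (r+6) = int X" "m (r+7) = int Dn"
    "p = off i" "m p = int d" "d = deg i"
  shows "\<exists>k m'. runsF \<lparr>pc = b+21, mem = m, outp = oo\<rparr> k \<lparr>pc = b+21, mem = m', outp = oo\<rparr> \<and> k \<le> 9
    \<and> (\<forall>a. notreg a \<longrightarrow> m' a = (m(X + i := int (off i))) a) \<and> m' (r+3) = 0 \<and> m' (r+4) = 1 \<and> m' (r+5) = int n
    \<and> m' (r+6) = int X \<and> m' (r+7) = int Dn
    \<and> m' (r+9) = int (i+1) \<and> m' (r+8) = int (off (i+1))"
proof -
  have np: "notreg p" using notreg_data[of i 0] assms by simp
  have pd: "p + d < E" using off_lt_E[of i d] assms by simp
  have ofs: "off (i+1) = p + d + 1" using offs_Suc[of i adj] assms by simp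
  have nx: "notreg (X + i)" using notreg_Xv .
  have pX: "(p = X + i) = False" using X_ne_data[of i 0 i] assms by simp
  have XB: "int X + int n \<le> B" using Bbig n_lt_E unfolding X_def by simp
  note Bb = Bbig n_lt_E
  show ?thesis
    using assms np pd Bb ofs nx pX XB
    apply (intro exI conjI)
    apply (rule runF1[where i=21])
     apply simp
    apply (simp add: gcode_def)
   apply (simp add: gcode_def pcS abs_le_iff del: add_Suc_right)
  apply (simp add: gcode_def pcS del: add_Suc_right)
    apply (rule runF1[where i=22])
     apply simp
    apply (simp add: gcode_def)
   apply (simp add: gcode_def pcS abs_le_iff del: add_Suc_right)
  apply (simp add: gcode_def pcS del: add_Suc_right)
    apply (rule runF1[where i=24])
     apply simp
    apply (simp add: gcode_def)
   apply (simp add: gcode_def pcS abs_le_iff del: add_Suc_right)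
  apply (simp add: gcode_def pcS del: add_Suc_right)
    apply (rule runF1[where i=25])
     apply simp
    apply (simp add: gcode_def)
   apply (simp add: gcode_def pcS abs_le_iff del: add_Suc_right)
  apply (simp add: gcode_def pcS del: add_Suc_right)
    apply (rule runF1[where i=26])
     apply simp
    apply (simp add: gcode_def)
   apply (simp add: gcode_def pcS abs_le_iff del: add_Suc_right)
  apply (simp add: gcode_def pcS del: add_Suc_right)
    apply (rule runF1[where i=27])
     apply simp
    apply (simp add: gcode_def)
   apply (simp add: gcode_def pcS abs_le_iff del: add_Suc_right)
  apply (simp add: gcode_def pcS del: add_Suc_right)
    apply (rule runF1[where i=28])
     apply simp
    apply (simp add: gcode_def)
   apply (simp add: gcode_def pcS abs_le_iff del: add_Suc_right)
  apply (simp add: gcode_def pcS del: add_Suc_right)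
    apply (rule runF1[where i=29])
     apply simp
    apply (simp add: gcode_def)
   apply (simp add: gcode_def pcS abs_le_iff del: add_Suc_right)
  apply (simp add: gcode_def pcS del: add_Suc_right)
    apply (rule runF1[where i=30])
     apply simp
    apply (simp add: gcode_def)
   apply (simp add: gcode_def pcS abs_le_iff del: add_Suc_right)
  apply (simp add: gcode_def pcS del: add_Suc_right)
    apply (rule runF0)
    apply simp_all
    done
qed

lemma pass2_exit:
  assumes "m (r+3) = 0" "m (r+4) = 1" "m (r+5) = int n" "m (r+9) = int n"
  shows "\<exists>k m'. runsF \<lparr>pc = b+21, mem = m, outp = oo\<rparr> k \<lparr>pc = b+32, mem = m', outp = oo\<rparr> \<and> k \<le> 4
    \<and> agree m m' \<and> (\<forall>i. i \<noteq> 12 \<longrightarrow> i \<noteq> 10 \<longrightarrow> m' (r + i) = m (r + i)) \<and> m' (r+12) = int 0"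
proof -
  note Bb = Bbig n_lt_E
  show ?thesis
    using assms Bb
    apply (intro exI conjI)
    apply (rule runF1[where i=21])
     apply simp
    apply (simp add: gcode_def)
   apply (simp add: gcode_def pcS abs_le_iff del: add_Suc_right)
  apply (simp add: gcode_def pcS del: add_Suc_right)
    apply (rule runF1[where i=22])
     apply simp
    apply (simp add: gcode_def)
   apply (simp add: gcode_def pcS abs_le_iff del: add_Suc_right)
  apply (simp add: gcode_def pcS del: add_Suc_right)
    apply (rule runF1[where i=23])
     apply simp
    apply (simp add: gcode_def)
   apply (simp add: gcode_def pcS abs_le_iff del: add_Suc_right)
  apply (simp add: gcode_def pcS del: add_Suc_right)
    apply (rule runF1[where i=31])
     apply simp
    apply (simp add: gcode_def)
   apply (simp add: gcode_def pcS abs_le_iff del: add_Suc_right)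
  apply (simp add: gcode_def pcS del: add_Suc_right)
    apply (rule runF0)
    apply simp_all
    done
qed

definition mainI :: "(nat \<Rightarrow> int) \<Rightarrow> bool" where
  "mainI m \<longleftrightarrow> m (r+3) = 0 \<and> m (r+4) = 1 \<and> m (r+5) = int n \<and> m (r+6) = int X \<and> m (r+7) = int Dn
     \<and> dat m \<and> offt m"

lemma prelude:
  assumes m0: "m 0 = int n" and d0: "dat m"
  shows "\<exists>k m'. runsF \<lparr>pc = b+3, mem = m, outp = oo\<rparr> k \<lparr>pc = b+32, mem = m', outp = oo\<rparr>
    \<and> k \<le> 16 * n + 17 \<and> mainI m' \<and> m' (r+12) = 0"
proof -
  obtain k1 m1 where e: "runsF \<lparr>pc = b+3, mem = m, outp = oo\<rparr> k1 \<lparr>pc = b+8, mem = m1, outp = oo\<rparr>" "k1 \<le> 5"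
    "agree m m1" "m1 (r+3) = 0" "m1 (r+4) = 1" "m1 (r+5) = int n" "m1 (r+9) = int 0" "m1 (r+8) = int (off 0)"
    using entry[of m oo] m0 by blast
  define I1 where "I1 i c \<longleftrightarrow> pc c = b+8 \<and> outp c = oo \<and> agree m (mem c) \<and> mem c (r+3) = 0 \<and> mem c (r+4) = 1
     \<and> mem c (r+5) = int n \<and> mem c (r+9) = int i \<and> mem c (r+8) = int (off i)" for i and c :: conf
  have L1: "\<exists>k c'. runsF \<lparr>pc = b+8, mem = m1, outp = oo\<rparr> k c' \<and> k \<le> (\<Sum>i\<leftarrow>[0..<n]. 7) \<and> I1 n c'"
  proof (rule loop_gen[where Inv = I1])
    fix i c assume i: "i < n" and I: "I1 i c"
    have dc: "dat (mem c)" using I d0 dat_agree unfolding I1_def by blast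
    obtain k m' where b: "runsF \<lparr>pc = b+8, mem = mem c, outp = outp c\<rparr> k \<lparr>pc = b+8, mem = m', outp = outp c\<rparr>" "k \<le> 7"
      "agree (mem c) m'" "m' (r+3) = 0" "m' (r+4) = 1" "m' (r+5) = int n" "m' (r+9) = int (i+1)" "m' (r+8) = int (off (i+1))"
      using pass1_body[of i "mem c" "off i" "deg i" "outp c"] I i datD(1)[OF dc i] unfolding I1_def by blast
    have ceq: "\<lparr>pc = b+8, mem = mem c, outp = outp c\<rparr> = c" using I unfolding I1_def by (metis conf_eta)
    show "\<exists>k c'. runsF c k c' \<and> k \<le> 7 \<and> I1 (Suc i) c'"
      using b(1)[unfolded ceq] b(2-) I agree_trans[of m "mem c" m'] unfolding I1_def
      by (intro exI[of _ k] exI[of _ "\<lparr>pc = b+8, mem = m', outp = outp c\<rparr>"]) auto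
  qed (use e in \<open>auto simp: I1_def\<close>)
  then obtain k2 c2 where L1': "runsF \<lparr>pc = b+8, mem = m1, outp = oo\<rparr> k2 c2" "k2 \<le> 7 * n" "I1 n c2"
    by (auto simp: sum_list_triv)
  have dc2: "dat (mem c2)" using L1' d0 dat_agree unfolding I1_def by blast
  have c2: "c2 = \<lparr>pc = b+8, mem = mem c2, outp = oo\<rparr>" using L1' unfolding I1_def by (metis conf_eta)
  have E: "off n = E" by simp
  obtain k3 m3 where x: "runsF \<lparr>pc = b+8, mem = mem c2, outp = oo\<rparr> k3 \<lparr>pc = b+21, mem = m3, outp = oo\<rparr>" "k3 \<le> 8"
    "agree (mem c2) m3" "m3 (r+3) = 0" "m3 (r+4) = 1" "m3 (r+5) = int n" "m3 (r+6) = int X" "m3 (r+7) = int Dn"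
    "m3 (r+9) = int 0" "m3 (r+8) = int (off 0)"
    using pass1_exit[of "mem c2" oo] L1' unfolding I1_def by auto
  have dm3: "dat m3" using dat_agree x(3) dc2 by blast
  define I2 where "I2 i c \<longleftrightarrow> pc c = b+21 \<and> outp c = oo \<and> dat (mem c) \<and> mem c (r+3) = 0 \<and> mem c (r+4) = 1
     \<and> mem c (r+5) = int n \<and> mem c (r+6) = int X \<and> mem c (r+7) = int Dn
     \<and> mem c (r+9) = int i \<and> mem c (r+8) = int (off i) \<and> (\<forall>v<i. mem c (X + v) = int (off v))" for i and c :: conf
  have L2: "\<exists>k c'. runsF \<lparr>pc = b+21, mem = m3, outp = oo\<rparr> k c' \<and> k \<le> (\<Sum>i\<leftarrow>[0..<n]. 9) \<and> I2 n c'"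
  proof (rule loop_gen[where Inv = I2])
    fix i c assume i: "i < n" and I: "I2 i c"
    have dc: "dat (mem c)" using I unfolding I2_def by blast
    obtain k m' where b: "runsF \<lparr>pc = b+21, mem = mem c, outp = outp c\<rparr> k \<lparr>pc = b+21, mem = m', outp = outp c\<rparr>" "k \<le> 9"
      "\<forall>a. notreg a \<longrightarrow> m' a = ((mem c)(X + i := int (off i))) a"
      "m' (r+3) = 0" "m' (r+4) = 1" "m' (r+5) = int n" "m' (r+6) = int X" "m' (r+7) = int Dn"
      "m' (r+9) = int (i+1)" "m' (r+8) = int (off (i+1))"
      using pass2_body[of i "mem c" "off i" "deg i" "outp c"] I i datD(1)[OF dc i] unfolding I2_def by blast
    have ag: "agree ((mem c)(X + i := int (off i))) m'" using b(3) unfolding agree_def by blast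
    have dm': "dat m'" using dat_agree[OF ag] dc by simp
    have ot: "\<forall>v<Suc i. m' (X + v) = int (off v)"
      using b(3) notreg_Xv I unfolding I2_def by auto
    have ceq: "\<lparr>pc = b+21, mem = mem c, outp = outp c\<rparr> = c" using I unfolding I2_def by (metis conf_eta)
    show "\<exists>k c'. runsF c k c' \<and> k \<le> 9 \<and> I2 (Suc i) c'"
      using b(1)[unfolded ceq] b(2) b(4-) I dm' ot unfolding I2_def
      by (intro exI[of _ k] exI[of _ "\<lparr>pc = b+21, mem = m', outp = outp c\<rparr>"]) auto
  qed (use x dm3 in \<open>auto simp: I2_def\<close>)
  then obtain k4 c4 where L2': "runsF \<lparr>pc = b+21, mem = m3, outp = oo\<rparr> k4 c4" "k4 \<le> 9 * n" "I2 n c4"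
    by (auto simp: sum_list_triv)
  have c4: "c4 = \<lparr>pc = b+21, mem = mem c4, outp = oo\<rparr>" using L2' unfolding I2_def by (metis conf_eta)
  obtain k5 m5 where y: "runsF \<lparr>pc = b+21, mem = mem c4, outp = oo\<rparr> k5 \<lparr>pc = b+32, mem = m5, outp = oo\<rparr>" "k5 \<le> 4"
    "agree (mem c4) m5" "\<forall>i. i \<noteq> 12 \<longrightarrow> i \<noteq> 10 \<longrightarrow> m5 (r + i) = mem c4 (r + i)" "m5 (r+12) = int 0"
    using pass2_exit[of "mem c4" oo] L2' unfolding I2_def by auto
  have "mainI m5"
  proof -
    have "dat (mem c4)" "offt (mem c4)" using L2' unfolding I2_def offt_def by auto
    then have "dat m5" "offt m5" using y(3) dat_agree offt_agree by blast+
    moreover have "m5 (r+3) = 0" "m5 (r+4) = 1" "m5 (r+5) = int n" "m5 (r+6) = int X" "m5 (r+7) = int Dn"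
      using y(4)[rule_format, of 3] y(4)[rule_format, of 4] y(4)[rule_format, of 5] y(4)[rule_format, of 6]
        y(4)[rule_format, of 7] L2' unfolding I2_def by auto
    ultimately show ?thesis unfolding mainI_def by simp
  qed
  moreover have "runsF \<lparr>pc = b+3, mem = m, outp = oo\<rparr> (k1 + k2 + k3 + k4 + k5) \<lparr>pc = b+32, mem = m5, outp = oo\<rparr>"
    using runsF_trans[OF runsF_trans[OF runsF_trans[OF runsF_trans[OF e(1) L1'(1)] x(1)[folded c2]] L2'(1)] y(1)[folded c4]] .
  ultimately show ?thesis using e(2) L1'(2) x(2) L2'(2) y(2) y(5)
    by (intro exI[of _ "k1 + k2 + k3 + k4 + k5"] exI[of _ m5]) auto
qed

definition "VM = E + Dn + n"
lemma n_le_VM: "n \<le> VM" unfolding VM_def by simp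
lemma E_le_VM: "E \<le> VM" unfolding VM_def by simp
lemma VMB: "int VM + 10 \<le> B" using Bbig n_lt_E unfolding VM_def Dn_def by simp

lemma K_body:
  assumes "m (r+4) = 1" "m (r+12) = int u" "m (r+16) = int v" "m (r+20) = int w" "m (r+23) = int q"
    "m (r+24) = int e" "q < e" "notreg q" "m q = int x" "e \<le> VM"
  shows "\<exists>k m'. runsF \<lparr>pc = b+73, mem = m, outp = oo\<rparr> k \<lparr>pc = b+73, mem = m', outp = oo @ [int u, int x, int w, int v]\<rparr> \<and> k \<le> 9
    \<and> (\<forall>a. notreg a \<longrightarrow> m' a = m a) \<and> m' (r+23) = int (q+1) \<and> (\<forall>j<25. j \<noteq> 10 \<longrightarrow> j \<noteq> 23 \<longrightarrow> m' (r+j) = m (r+j))"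
proof -
  note Bb = VMB n_le_VM E_le_VM
  show ?thesis
    using assms Bb
    apply (intro exI conjI)
    apply (rule runF1[where i=73])
     apply simp
    apply (simp add: gcode_def)
   apply (simp add: gcode_def pcS abs_le_iff del: add_Suc_right)
  apply (simp add: gcode_def pcS del: add_Suc_right)
    apply (rule runF1[where i=74])
     apply simp
    apply (simp add: gcode_def)
   apply (simp add: gcode_def pcS abs_le_iff del: add_Suc_right)
  apply (simp add: gcode_def pcS del: add_Suc_right)
    apply (rule runF1[where i=76])
     apply simp
    apply (simp add: gcode_def)
   apply (simp add: gcode_def pcS abs_le_iff del: add_Suc_right)
  apply (simp add: gcode_def pcS del: add_Suc_right)
    apply (rule runF1[where i=77])
     apply simp
    apply (simp add: gcode_def)
   apply (simp add: gcode_def pcS abs_le_iff del: add_Suc_right)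
  apply (simp add: gcode_def pcS del: add_Suc_right)
    apply (rule runF1[where i=78])
     apply simp
    apply (simp add: gcode_def)
   apply (simp add: gcode_def pcS abs_le_iff del: add_Suc_right)
  apply (simp add: gcode_def pcS del: add_Suc_right)
    apply (rule runF1[where i=79])
     apply simp
    apply (simp add: gcode_def)
   apply (simp add: gcode_def pcS abs_le_iff del: add_Suc_right)
  apply (simp add: gcode_def pcS del: add_Suc_right)
    apply (rule runF1[where i=80])
     apply simp
    apply (simp add: gcode_def)
   apply (simp add: gcode_def pcS abs_le_iff del: add_Suc_right)
  apply (simp add: gcode_def pcS del: add_Suc_right)
    apply (rule runF1[where i=81])
     apply simp
    apply (simp add: gcode_def)
   apply (simp add: gcode_def pcS abs_le_iff del: add_Suc_right)
  apply (simp add: gcode_def pcS del: add_Suc_right)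
    apply (rule runF1[where i=82])
     apply simp
    apply (simp add: gcode_def)
   apply (simp add: gcode_def pcS abs_le_iff del: add_Suc_right)
  apply (simp add: gcode_def pcS del: add_Suc_right)
    apply (rule runF0)
    apply simp_all
    done
qed

lemma K_exit:
  assumes "m (r+4) = 1" "m (r+16) = int v" "m (r+21) = int s" "m (r+22) = int c" "m (r+23) = int e"
    "m (r+24) = int e" "m (r+19) = int q2" "c \<le> VM" "q2 \<le> VM" "e \<le> VM" "notreg e" "notreg s"
  shows "\<exists>k m'. runsF \<lparr>pc = b+73, mem = m, outp = oo\<rparr> k \<lparr>pc = b+61, mem = m', outp = oo\<rparr> \<and> k \<le> 8
    \<and> (\<forall>a. notreg a \<longrightarrow> m' a = (m(e := int v, s := int (c+1))) a) \<and> m' (r+22) = int (c+1) \<and> m' (r+19) = int (q2+1)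
    \<and> (\<forall>j<25. j \<noteq> 10 \<longrightarrow> j \<noteq> 22 \<longrightarrow> j \<noteq> 19 \<longrightarrow> m' (r+j) = m (r+j))"
proof -
  note Bb = VMB n_le_VM E_le_VM
  show ?thesis
    using assms Bb
    apply (intro exI conjI)
    apply (rule runF1[where i=73])
     apply simp
    apply (simp add: gcode_def)
   apply (simp add: gcode_def pcS abs_le_iff del: add_Suc_right)
  apply (simp add: gcode_def pcS del: add_Suc_right)
    apply (rule runF1[where i=74])
     apply simp
    apply (simp add: gcode_def)
   apply (simp add: gcode_def pcS abs_le_iff del: add_Suc_right)
  apply (simp add: gcode_def pcS del: add_Suc_right)
    apply (rule runF1[where i=75])
     apply simp
    apply (simp add: gcode_def)
   apply (simp add: gcode_def pcS abs_le_iff del: add_Suc_right)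
  apply (simp add: gcode_def pcS del: add_Suc_right)
    apply (rule runF1[where i=83])
     apply simp
    apply (simp add: gcode_def)
   apply (simp add: gcode_def pcS abs_le_iff del: add_Suc_right)
  apply (simp add: gcode_def pcS del: add_Suc_right)
    apply (rule runF1[where i=84])
     apply simp
    apply (simp add: gcode_def)
   apply (simp add: gcode_def pcS abs_le_iff del: add_Suc_right)
  apply (simp add: gcode_def pcS del: add_Suc_right)
    apply (rule runF1[where i=85])
     apply simp
    apply (simp add: gcode_def)
   apply (simp add: gcode_def pcS abs_le_iff del: add_Suc_right)
  apply (simp add: gcode_def pcS del: add_Suc_right)
    apply (rule runF1[where i=86])
     apply simp
    apply (simp add: gcode_def)
   apply (simp add: gcode_def pcS abs_le_iff del: add_Suc_right)
  apply (simp add: gcode_def pcS del: add_Suc_right)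
    apply (rule runF1[where i=87])
     apply simp
    apply (simp add: gcode_def)
   apply (simp add: gcode_def pcS abs_le_iff del: add_Suc_right)
  apply (simp add: gcode_def pcS del: add_Suc_right)
    apply (rule runF0)
    apply simp_all
    done
qed

lemma W_skip:
  assumes "m (r+4) = 1" "m (r+12) = int u" "m (r+18) = int ev" "m (r+19) = int q2" "q2 < ev" "notreg q2"
    "m q2 = int w" "w = u" "ev \<le> VM"
  shows "\<exists>k m'. runsF \<lparr>pc = b+61, mem = m, outp = oo\<rparr> k \<lparr>pc = b+61, mem = m', outp = oo\<rparr> \<and> k \<le> 7
    \<and> (\<forall>a. notreg a \<longrightarrow> m' a = m a) \<and> m' (r+19) = int (q2+1) \<and> m' (r+20) = int w
    \<and> (\<forall>j<25. j \<noteq> 10 \<longrightarrow> j \<noteq> 19 \<longrightarrow> j \<noteq> 20 \<longrightarrow> m' (r+j) = m (r+j))"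
proof -
  note Bb = VMB n_le_VM E_le_VM
  show ?thesis
    using assms Bb
    apply (intro exI conjI)
    apply (rule runF1[where i=61])
     apply simp
    apply (simp add: gcode_def)
   apply (simp add: gcode_def pcS abs_le_iff del: add_Suc_right)
  apply (simp add: gcode_def pcS del: add_Suc_right)
    apply (rule runF1[where i=62])
     apply simp
    apply (simp add: gcode_def)
   apply (simp add: gcode_def pcS abs_le_iff del: add_Suc_right)
  apply (simp add: gcode_def pcS del: add_Suc_right)
    apply (rule runF1[where i=64])
     apply simp
    apply (simp add: gcode_def)
   apply (simp add: gcode_def pcS abs_le_iff del: add_Suc_right)
  apply (simp add: gcode_def pcS del: add_Suc_right)
    apply (rule runF1[where i=65])
     apply simp
    apply (simp add: gcode_def)
   apply (simp add: gcode_def pcS abs_le_iff del: add_Suc_right)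
  apply (simp add: gcode_def pcS del: add_Suc_right)
    apply (rule runF1[where i=66])
     apply simp
    apply (simp add: gcode_def)
   apply (simp add: gcode_def pcS abs_le_iff del: add_Suc_right)
  apply (simp add: gcode_def pcS del: add_Suc_right)
    apply (rule runF1[where i=86])
     apply simp
    apply (simp add: gcode_def)
   apply (simp add: gcode_def pcS abs_le_iff del: add_Suc_right)
  apply (simp add: gcode_def pcS del: add_Suc_right)
    apply (rule runF1[where i=87])
     apply simp
    apply (simp add: gcode_def)
   apply (simp add: gcode_def pcS abs_le_iff del: add_Suc_right)
  apply (simp add: gcode_def pcS del: add_Suc_right)
    apply (rule runF0)
    apply simp_all
    done
qed

lemma W_enter:
  assumes "m (r+4) = 1" "m (r+6) = int X" "m (r+7) = int Dn" "m (r+12) = int u" "m (r+18) = int ev"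
    "m (r+19) = int q2" "q2 < ev" "notreg q2" "m q2 = int w" "w \<noteq> u" "w < n" "ev \<le> VM" "u \<le> VM" "w \<le> VM"
    "m (X + w) = int (off w)" "m (sh w) = int c" "sh w + 1 + c \<le> VM" "X + w \<le> VM"
  shows "\<exists>k m'. runsF \<lparr>pc = b+61, mem = m, outp = oo\<rparr> k \<lparr>pc = b+73, mem = m', outp = oo\<rparr> \<and> k \<le> 12
    \<and> (\<forall>a. notreg a \<longrightarrow> m' a = m a) \<and> m' (r+20) = int w \<and> m' (r+21) = int (sh w) \<and> m' (r+22) = int c
    \<and> m' (r+23) = int (sh w + 1) \<and> m' (r+24) = int (sh w + 1 + c)
    \<and> (\<forall>j<25. j \<notin> {10, 11, 20, 21, 22, 23, 24} \<longrightarrow> m' (r+j) = m (r+j))"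
proof -
  note Bb = VMB n_le_VM E_le_VM
  have nx: "notreg (X + w)" by (rule notreg_Xv)
  have ns: "notreg (sh w)" using notreg_sh[of w 0] assms by simp
  show ?thesis
    using assms Bb nx ns
    apply (intro exI conjI)
    apply (rule runF1[where i=61])
     apply simp
    apply (simp add: gcode_def)
   apply (simp add: gcode_def pcS abs_le_iff del: add_Suc_right)
  apply (simp add: gcode_def pcS del: add_Suc_right)
    apply (rule runF1[where i=62])
     apply simp
    apply (simp add: gcode_def)
   apply (simp add: gcode_def pcS abs_le_iff del: add_Suc_right)
  apply (simp add: gcode_def pcS del: add_Suc_right)
    apply (rule runF1[where i=64])
     apply simp
    apply (simp add: gcode_def)
   apply (simp add: gcode_def pcS abs_le_iff del: add_Suc_right)
  apply (simp add: gcode_def pcS del: add_Suc_right)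
    apply (rule runF1[where i=65])
     apply simp
    apply (simp add: gcode_def)
   apply (simp add: gcode_def pcS abs_le_iff del: add_Suc_right)
  apply (simp add: gcode_def pcS del: add_Suc_right)
    apply (rule runF1[where i=66])
     apply simp
    apply (simp add: gcode_def)
   apply (simp add: gcode_def pcS abs_le_iff del: add_Suc_right)
  apply (simp add: gcode_def pcS del: add_Suc_right)
    apply (rule runF1[where i=67])
     apply simp
    apply (simp add: gcode_def)
   apply (simp add: gcode_def pcS abs_le_iff del: add_Suc_right)
  apply (simp add: gcode_def pcS del: add_Suc_right)
    apply (rule runF1[where i=68])
     apply simp
    apply (simp add: gcode_def)
   apply (simp add: gcode_def pcS abs_le_iff del: add_Suc_right)
  apply (simp add: gcode_def pcS del: add_Suc_right)
    apply (rule runF1[where i=69])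
     apply simp
    apply (simp add: gcode_def)
   apply (simp add: gcode_def pcS abs_le_iff del: add_Suc_right)
  apply (simp add: gcode_def pcS del: add_Suc_right)
    apply (rule runF1[where i=70])
     apply simp
    apply (simp add: gcode_def)
   apply (simp add: gcode_def pcS abs_le_iff del: add_Suc_right)
  apply (simp add: gcode_def pcS del: add_Suc_right)
    apply (rule runF1[where i=71])
     apply simp
    apply (simp add: gcode_def)
   apply (simp add: gcode_def pcS abs_le_iff del: add_Suc_right)
  apply (simp add: gcode_def pcS del: add_Suc_right)
    apply (rule runF1[where i=72])
     apply simp
    apply (simp add: gcode_def)
   apply (simp add: gcode_def pcS abs_le_iff del: add_Suc_right)
  apply (simp add: gcode_def pcS del: add_Suc_right)
    apply (rule runF0)
    apply simp_all
    done
qed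

lemma W_exit:
  assumes "m (r+4) = 1" "m (r+18) = int ev" "m (r+19) = int ev" "m (r+15) = int q" "q \<le> VM" "ev \<le> VM"
  shows "\<exists>k m'. runsF \<lparr>pc = b+61, mem = m, outp = oo\<rparr> k \<lparr>pc = b+51, mem = m', outp = oo\<rparr> \<and> k \<le> 5
    \<and> (\<forall>a. notreg a \<longrightarrow> m' a = m a) \<and> m' (r+15) = int (q+1)
    \<and> (\<forall>j<25. j \<noteq> 10 \<longrightarrow> j \<noteq> 15 \<longrightarrow> m' (r+j) = m (r+j))"
proof -
  note Bb = VMB n_le_VM E_le_VM
  show ?thesis
    using assms Bb
    apply (intro exI conjI)
    apply (rule runF1[where i=61])
     apply simp
    apply (simp add: gcode_def)
   apply (simp add: gcode_def pcS abs_le_iff del: add_Suc_right)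
  apply (simp add: gcode_def pcS del: add_Suc_right)
    apply (rule runF1[where i=62])
     apply simp
    apply (simp add: gcode_def)
   apply (simp add: gcode_def pcS abs_le_iff del: add_Suc_right)
  apply (simp add: gcode_def pcS del: add_Suc_right)
    apply (rule runF1[where i=63])
     apply simp
    apply (simp add: gcode_def)
   apply (simp add: gcode_def pcS abs_le_iff del: add_Suc_right)
  apply (simp add: gcode_def pcS del: add_Suc_right)
    apply (rule runF1[where i=88])
     apply simp
    apply (simp add: gcode_def)
   apply (simp add: gcode_def pcS abs_le_iff del: add_Suc_right)
  apply (simp add: gcode_def pcS del: add_Suc_right)
    apply (rule runF1[where i=89])
     apply simp
    apply (simp add: gcode_def)
   apply (simp add: gcode_def pcS abs_le_iff del: add_Suc_right)
  apply (simp add: gcode_def pcS del: add_Suc_right)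
    apply (rule runF0)
    apply simp_all
    done
qed

lemma V_enter:
  assumes "m (r+4) = 1" "m (r+6) = int X" "m (r+14) = int eu" "m (r+15) = int q" "q < eu" "notreg q"
    "m q = int v" "v < n" "m (X + v) = int (off v)" "m (off v) = int (deg v)" "eu \<le> VM" "X + v \<le> VM"
  shows "\<exists>k m'. runsF \<lparr>pc = b+51, mem = m, outp = oo\<rparr> k \<lparr>pc = b+61, mem = m', outp = oo\<rparr> \<and> k \<le> 10
    \<and> (\<forall>a. notreg a \<longrightarrow> m' a = m a) \<and> m' (r+16) = int v \<and> m' (r+17) = int (off v)
    \<and> m' (r+18) = int (off v + deg v + 1) \<and> m' (r+19) = int (off v + 1)
    \<and> (\<forall>j<25. j \<notin> {10, 11, 16, 17, 18, 19} \<longrightarrow> m' (r+j) = m (r+j))"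
proof -
  note Bb = VMB n_le_VM E_le_VM
  have nx: "notreg (X + v)" by (rule notreg_Xv)
  have no: "notreg (off v)" using notreg_data[of v 0] assms by simp
  have oE: "off v + deg v < E" using off_lt_E[of v "deg v"] assms by simp
  show ?thesis
    using assms Bb nx no oE
    apply (intro exI conjI)
    apply (rule runF1[where i=51])
     apply simp
    apply (simp add: gcode_def)
   apply (simp add: gcode_def pcS abs_le_iff del: add_Suc_right)
  apply (simp add: gcode_def pcS del: add_Suc_right)
    apply (rule runF1[where i=52])
     apply simp
    apply (simp add: gcode_def)
   apply (simp add: gcode_def pcS abs_le_iff del: add_Suc_right)
  apply (simp add: gcode_def pcS del: add_Suc_right)
    apply (rule runF1[where i=54])
     apply simp
    apply (simp add: gcode_def)
   apply (simp add: gcode_def pcS abs_le_iff del: add_Suc_right)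
  apply (simp add: gcode_def pcS del: add_Suc_right)
    apply (rule runF1[where i=55])
     apply simp
    apply (simp add: gcode_def)
   apply (simp add: gcode_def pcS abs_le_iff del: add_Suc_right)
  apply (simp add: gcode_def pcS del: add_Suc_right)
    apply (rule runF1[where i=56])
     apply simp
    apply (simp add: gcode_def)
   apply (simp add: gcode_def pcS abs_le_iff del: add_Suc_right)
  apply (simp add: gcode_def pcS del: add_Suc_right)
    apply (rule runF1[where i=57])
     apply simp
    apply (simp add: gcode_def)
   apply (simp add: gcode_def pcS abs_le_iff del: add_Suc_right)
  apply (simp add: gcode_def pcS del: add_Suc_right)
    apply (rule runF1[where i=58])
     apply simp
    apply (simp add: gcode_def)
   apply (simp add: gcode_def pcS abs_le_iff del: add_Suc_right)
  apply (simp add: gcode_def pcS del: add_Suc_right)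
    apply (rule runF1[where i=59])
     apply simp
    apply (simp add: gcode_def)
   apply (simp add: gcode_def pcS abs_le_iff del: add_Suc_right)
  apply (simp add: gcode_def pcS del: add_Suc_right)
    apply (rule runF1[where i=60])
     apply simp
    apply (simp add: gcode_def)
   apply (simp add: gcode_def pcS abs_le_iff del: add_Suc_right)
  apply (simp add: gcode_def pcS del: add_Suc_right)
    apply (rule runF0)
    apply simp_all
    done
qed

lemma V_exit:
  assumes "m (r+4) = 1" "m (r+14) = int eu" "m (r+15) = int eu" "m (r+12) = int u" "eu \<le> VM" "u \<le> VM"
  shows "\<exists>k m'. runsF \<lparr>pc = b+51, mem = m, outp = oo\<rparr> k \<lparr>pc = b+32, mem = m', outp = oo\<rparr> \<and> k \<le> 5
    \<and> (\<forall>a. notreg a \<longrightarrow> m' a = m a) \<and> m' (r+12) = int (u+1)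
    \<and> (\<forall>j<25. j \<noteq> 10 \<longrightarrow> j \<noteq> 12 \<longrightarrow> m' (r+j) = m (r+j))"
proof -
  note Bb = VMB n_le_VM E_le_VM
  show ?thesis
    using assms Bb
    apply (intro exI conjI)
    apply (rule runF1[where i=51])
     apply simp
    apply (simp add: gcode_def)
   apply (simp add: gcode_def pcS abs_le_iff del: add_Suc_right)
  apply (simp add: gcode_def pcS del: add_Suc_right)
    apply (rule runF1[where i=52])
     apply simp
    apply (simp add: gcode_def)
   apply (simp add: gcode_def pcS abs_le_iff del: add_Suc_right)
  apply (simp add: gcode_def pcS del: add_Suc_right)
    apply (rule runF1[where i=53])
     apply simp
    apply (simp add: gcode_def)
   apply (simp add: gcode_def pcS abs_le_iff del: add_Suc_right)
  apply (simp add: gcode_def pcS del: add_Suc_right)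
    apply (rule runF1[where i=90])
     apply simp
    apply (simp add: gcode_def)
   apply (simp add: gcode_def pcS abs_le_iff del: add_Suc_right)
  apply (simp add: gcode_def pcS del: add_Suc_right)
    apply (rule runF1[where i=91])
     apply simp
    apply (simp add: gcode_def)
   apply (simp add: gcode_def pcS abs_le_iff del: add_Suc_right)
  apply (simp add: gcode_def pcS del: add_Suc_right)
    apply (rule runF0)
    apply simp_all
    done
qed

lemma U_head:
  assumes "m (r+5) = int n" "m (r+12) = int u" "u < n"
  shows "\<exists>k m'. runsF \<lparr>pc = b+32, mem = m, outp = oo\<rparr> k \<lparr>pc = b+36, mem = m', outp = oo\<rparr> \<and> k \<le> 3
    \<and> (\<forall>a. notreg a \<longrightarrow> m' a = m a) \<and> m' (r+9) = int 0
    \<and> (\<forall>j<25. j \<noteq> 10 \<longrightarrow> j \<noteq> 9 \<longrightarrow> m' (r+j) = m (r+j))"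
proof -
  note Bb = VMB n_le_VM E_le_VM
  show ?thesis
    using assms Bb
    apply (intro exI conjI)
    apply (rule runF1[where i=32])
     apply simp
    apply (simp add: gcode_def)
   apply (simp add: gcode_def pcS abs_le_iff del: add_Suc_right)
  apply (simp add: gcode_def pcS del: add_Suc_right)
    apply (rule runF1[where i=33])
     apply simp
    apply (simp add: gcode_def)
   apply (simp add: gcode_def pcS abs_le_iff del: add_Suc_right)
  apply (simp add: gcode_def pcS del: add_Suc_right)
    apply (rule runF1[where i=35])
     apply simp
    apply (simp add: gcode_def)
   apply (simp add: gcode_def pcS abs_le_iff del: add_Suc_right)
  apply (simp add: gcode_def pcS del: add_Suc_right)
    apply (rule runF0)
    apply simp_all
    done
qed

lemma U_exit:
  assumes "m (r+5) = int n" "m (r+12) = int n"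
  shows "\<exists>k m'. runsF \<lparr>pc = b+32, mem = m, outp = oo\<rparr> k \<lparr>pc = b+92, mem = m', outp = oo\<rparr> \<and> k \<le> 3
    \<and> (\<forall>a. notreg a \<longrightarrow> m' a = m a)"
proof -
  note Bb = VMB n_le_VM E_le_VM
  show ?thesis
    using assms Bb
    apply (intro exI conjI)
    apply (rule runF1[where i=32])
     apply simp
    apply (simp add: gcode_def)
   apply (simp add: gcode_def pcS abs_le_iff del: add_Suc_right)
  apply (simp add: gcode_def pcS del: add_Suc_right)
    apply (rule runF1[where i=33])
     apply simp
    apply (simp add: gcode_def)
   apply (simp add: gcode_def pcS abs_le_iff del: add_Suc_right)
  apply (simp add: gcode_def pcS del: add_Suc_right)
    apply (rule runF1[where i=34])
     apply simp
    apply (simp add: gcode_def)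
   apply (simp add: gcode_def pcS abs_le_iff del: add_Suc_right)
  apply (simp add: gcode_def pcS del: add_Suc_right)
    apply (rule runF0)
    apply simp_all
    done
qed

lemma R_body:
  assumes "m (r+3) = 0" "m (r+4) = 1" "m (r+5) = int n" "m (r+6) = int X" "m (r+7) = int Dn" "m (r+9) = int i"
    "i < n" "m (X + i) = int (off i)" "X + i \<le> VM" "sh i \<le> VM"
  shows "\<exists>k m'. runsF \<lparr>pc = b+36, mem = m, outp = oo\<rparr> k \<lparr>pc = b+36, mem = m', outp = oo\<rparr> \<and> k \<le> 8
    \<and> (\<forall>a. notreg a \<longrightarrow> m' a = (m(sh i := 0)) a) \<and> m' (r+9) = int (i+1)
    \<and> (\<forall>j<25. j \<notin> {9, 10, 11} \<longrightarrow> m' (r+j) = m (r+j))"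
proof -
  note Bb = VMB n_le_VM E_le_VM
  have nx: "notreg (X + i)" by (rule notreg_Xv)
  have ns: "notreg (sh i)" using notreg_sh[of i 0] assms by simp
  show ?thesis
    using assms Bb nx ns
    apply (intro exI conjI)
    apply (rule runF1[where i=36])
     apply simp
    apply (simp add: gcode_def)
   apply (simp add: gcode_def pcS abs_le_iff del: add_Suc_right)
  apply (simp add: gcode_def pcS del: add_Suc_right)
    apply (rule runF1[where i=37])
     apply simp
    apply (simp add: gcode_def)
   apply (simp add: gcode_def pcS abs_le_iff del: add_Suc_right)
  apply (simp add: gcode_def pcS del: add_Suc_right)
    apply (rule runF1[where i=39])
     apply simp
    apply (simp add: gcode_def)
   apply (simp add: gcode_def pcS abs_le_iff del: add_Suc_right)
  apply (simp add: gcode_def pcS del: add_Suc_right)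
    apply (rule runF1[where i=40])
     apply simp
    apply (simp add: gcode_def)
   apply (simp add: gcode_def pcS abs_le_iff del: add_Suc_right)
  apply (simp add: gcode_def pcS del: add_Suc_right)
    apply (rule runF1[where i=41])
     apply simp
    apply (simp add: gcode_def)
   apply (simp add: gcode_def pcS abs_le_iff del: add_Suc_right)
  apply (simp add: gcode_def pcS del: add_Suc_right)
    apply (rule runF1[where i=42])
     apply simp
    apply (simp add: gcode_def)
   apply (simp add: gcode_def pcS abs_le_iff del: add_Suc_right)
  apply (simp add: gcode_def pcS del: add_Suc_right)
    apply (rule runF1[where i=43])
     apply simp
    apply (simp add: gcode_def)
   apply (simp add: gcode_def pcS abs_le_iff del: add_Suc_right)
  apply (simp add: gcode_def pcS del: add_Suc_right)
    apply (rule runF1[where i=44])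
     apply simp
    apply (simp add: gcode_def)
   apply (simp add: gcode_def pcS abs_le_iff del: add_Suc_right)
  apply (simp add: gcode_def pcS del: add_Suc_right)
    apply (rule runF0)
    apply simp_all
    done
qed

lemma R_exit:
  assumes "m (r+4) = 1" "m (r+5) = int n" "m (r+6) = int X" "m (r+9) = int n" "m (r+12) = int u"
    "u < n" "m (X + u) = int (off u)" "m (off u) = int (deg u)" "X + u \<le> VM"
  shows "\<exists>k m'. runsF \<lparr>pc = b+36, mem = m, outp = oo\<rparr> k \<lparr>pc = b+51, mem = m', outp = oo\<rparr> \<and> k \<le> 9
    \<and> (\<forall>a. notreg a \<longrightarrow> m' a = m a) \<and> m' (r+13) = int (off u) \<and> m' (r+14) = int (off u + deg u + 1)
    \<and> m' (r+15) = int (off u + 1)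
    \<and> (\<forall>j<25. j \<notin> {10, 11, 13, 14, 15} \<longrightarrow> m' (r+j) = m (r+j))"
proof -
  note Bb = VMB n_le_VM E_le_VM
  have nx: "notreg (X + u)" by (rule notreg_Xv)
  have no: "notreg (off u)" using notreg_data[of u 0] assms by simp
  have oE: "off u + deg u < E" using off_lt_E[of u "deg u"] assms by simp
  show ?thesis
    using assms Bb nx no oE
    apply (intro exI conjI)
    apply (rule runF1[where i=36])
     apply simp
    apply (simp add: gcode_def)
   apply (simp add: gcode_def pcS abs_le_iff del: add_Suc_right)
  apply (simp add: gcode_def pcS del: add_Suc_right)
    apply (rule runF1[where i=37])
     apply simp
    apply (simp add: gcode_def)
   apply (simp add: gcode_def pcS abs_le_iff del: add_Suc_right)
  apply (simp add: gcode_def pcS del: add_Suc_right)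
    apply (rule runF1[where i=38])
     apply simp
    apply (simp add: gcode_def)
   apply (simp add: gcode_def pcS abs_le_iff del: add_Suc_right)
  apply (simp add: gcode_def pcS del: add_Suc_right)
    apply (rule runF1[where i=45])
     apply simp
    apply (simp add: gcode_def)
   apply (simp add: gcode_def pcS abs_le_iff del: add_Suc_right)
  apply (simp add: gcode_def pcS del: add_Suc_right)
    apply (rule runF1[where i=46])
     apply simp
    apply (simp add: gcode_def)
   apply (simp add: gcode_def pcS abs_le_iff del: add_Suc_right)
  apply (simp add: gcode_def pcS del: add_Suc_right)
    apply (rule runF1[where i=47])
     apply simp
    apply (simp add: gcode_def)
   apply (simp add: gcode_def pcS abs_le_iff del: add_Suc_right)
  apply (simp add: gcode_def pcS del: add_Suc_right)
    apply (rule runF1[where i=48])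
     apply simp
    apply (simp add: gcode_def)
   apply (simp add: gcode_def pcS abs_le_iff del: add_Suc_right)
  apply (simp add: gcode_def pcS del: add_Suc_right)
    apply (rule runF1[where i=49])
     apply simp
    apply (simp add: gcode_def)
   apply (simp add: gcode_def pcS abs_le_iff del: add_Suc_right)
  apply (simp add: gcode_def pcS del: add_Suc_right)
    apply (rule runF1[where i=50])
     apply simp
    apply (simp add: gcode_def)
   apply (simp add: gcode_def pcS abs_le_iff del: add_Suc_right)
  apply (simp add: gcode_def pcS del: add_Suc_right)
    apply (rule runF0)
    apply simp_all
    done
qed

definition LsW :: "nat \<Rightarrow> nat \<Rightarrow> nat \<Rightarrow> nat \<Rightarrow> nat list" where
  "LsW u i j w = Lw adj u (take i (adj ! u)) w @
     (if w \<noteq> u \<and> w \<in> set (take j (adj ! (adj ! u ! i))) then [adj ! u ! i] else [])"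

lemma LsW_0: "LsW u i 0 = Lw adj u (take i (adj ! u))"
  unfolding LsW_def by auto

lemma LsW_end: "i < deg u \<Longrightarrow> LsW u i (deg (adj ! u ! i)) = Lw adj u (take (Suc i) (adj ! u))"
  unfolding LsW_def Lw_def by (auto simp: take_Suc_conv_app_nth)

lemma LsW_step_eq: "u < n \<Longrightarrow> i < deg u \<Longrightarrow> j < deg (adj ! u ! i) \<Longrightarrow> adj ! (adj ! u ! i) ! j = u \<Longrightarrow>
  LsW u i (Suc j) = LsW u i j"
  unfolding LsW_def by (auto simp: take_Suc_conv_app_nth)

lemma LsW_step_ne: "u < n \<Longrightarrow> i < deg u \<Longrightarrow> j < deg (adj ! u ! i) \<Longrightarrow> w = adj ! (adj ! u ! i) ! j \<Longrightarrow> w \<noteq> u \<Longrightarrow>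
  LsW u i (Suc j) = (LsW u i j)(w := LsW u i j w @ [adj ! u ! i])"
proof -
  assume a: "u < n" "i < deg u" "j < deg (adj ! u ! i)" "w = adj ! (adj ! u ! i) ! j" "w \<noteq> u"
  have vn: "adj ! u ! i < n" using a vf(2)[of u "adj ! u ! i"] by simp
  have "w \<notin> set (take j (adj ! (adj ! u ! i)))" using nth_notin_take[OF vf(1)[OF vn] a(3)] a(4) by simp
  then show ?thesis unfolding LsW_def using a by (auto simp: take_Suc_conv_app_nth)
qed

lemma LsW_cur: "u < n \<Longrightarrow> i < deg u \<Longrightarrow> j < deg (adj ! u ! i) \<Longrightarrow> w = adj ! (adj ! u ! i) ! j \<Longrightarrow>
  LsW u i j w = Lw adj u (take i (adj ! u)) w"
proof -
  assume a: "u < n" "i < deg u" "j < deg (adj ! u ! i)" "w = adj ! (adj ! u ! i) ! j"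
  have vn: "adj ! u ! i < n" using a vf(2)[of u "adj ! u ! i"] by simp
  have "w \<notin> set (take j (adj ! (adj ! u ! i)))" using nth_notin_take[OF vf(1)[OF vn] a(3)] a(4) by simp
  then show ?thesis unfolding LsW_def by simp
qed

lemma len_le_deg: "distinct xs \<Longrightarrow> set xs \<subseteq> set (adj ! w) \<Longrightarrow> w < n \<Longrightarrow> length xs \<le> deg w"
proof -
  assume a: "distinct xs" "set xs \<subseteq> set (adj ! w)" "w < n"
  have "length xs = card (set xs)" using a(1) by (simp add: distinct_card)
  also have "\<dots> \<le> card (set (adj ! w))" using a(2) by (intro card_mono) auto
  also have "\<dots> = deg w" using vf(1)[OF a(3)] by (simp add: distinct_card)
  finally show ?thesis .
qed

lemma LsW_cap: assumes "u < n" "i < deg u" "j \<le> deg (adj ! u ! i)" "w < n"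
  shows "length (LsW u i j w) \<le> deg w"
proof -
  let ?v = "adj ! u ! i"
  have vn: "?v < n" using assms vf(2)[of u ?v] by simp
  have dvs: "distinct (take i (adj ! u))" using vf(1)[OF assms(1)] by simp
  have vnot: "?v \<notin> set (take i (adj ! u))" using nth_notin_take[OF vf(1)[OF assms(1)] assms(2)] .
  have d: "distinct (LsW u i j w)" unfolding LsW_def Lw_def using dvs vnot by auto
  have s: "set (LsW u i j w) \<subseteq> set (adj ! w)"
  proof
    fix x assume x: "x \<in> set (LsW u i j w)"
    show "x \<in> set (adj ! w)"
    proof (cases "x = ?v \<and> w \<noteq> u \<and> w \<in> set (take j (adj ! ?v))")
      case True
      then have "w \<in> set (adj ! ?v)" by (meson in_set_takeD)
      then show ?thesis using True vf(4)[OF vn assms(4)] by simp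
    next
      case False
      then have "x \<in> set (take i (adj ! u))" "w \<in> set (adj ! x)" using x unfolding LsW_def Lw_def
        by (auto split: if_splits)
      moreover have "x < n" using calculation(1) vf(2)[OF assms(1)] by (meson in_set_takeD)
      ultimately show ?thesis using vf(4)[OF _ assms(4)] by blast
    qed
  qed
  show ?thesis using len_le_deg[OF d s assms(4)] .
qed

lemma LsW_cap_lt: assumes "u < n" "i < deg u" "j < deg (adj ! u ! i)" "w = adj ! (adj ! u ! i) ! j" "w \<noteq> u"
  shows "length (LsW u i j w) < deg w"
proof -
  have wn: "w < n" using assms vf(2)[of u "adj ! u ! i"] vf(2)[of "adj ! u ! i" w] by simp
  have "length (LsW u i (Suc j) w) \<le> deg w" using LsW_cap[OF assms(1,2) _ wn] assms(3) by simp
  then show ?thesis using LsW_step_ne[OF assms] by simp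
qed

lemma shad_upd:
  assumes sh: "shad m Ls" and w: "w < n" and cap: "length (Ls w) < deg w"
  shows "shad (m(sh w + 1 + length (Ls w) := int x, sh w := int (length (Ls w) + 1))) (Ls(w := Ls w @ [x]))"
  unfolding shad_def
proof (intro allI impI conjI)
  let ?c = "length (Ls w)"
  let ?m = "m(sh w + 1 + ?c := int x, sh w := int (?c + 1))"
  let ?L = "Ls(w := Ls w @ [x])"
  fix w' assume w': "w' < n"
  have shw': "length (Ls w') \<le> deg w'" "m (sh w') = int (length (Ls w'))"
    "\<And>k. k < length (Ls w') \<Longrightarrow> m (sh w' + 1 + k) = int (Ls w' ! k)" using sh w' unfolding shad_def by auto
  have ne: "off w' + j' = off w + j \<Longrightarrow> j' \<le> deg w' \<Longrightarrow> j \<le> deg w \<Longrightarrow> w' = w \<and> j' = j" for j j'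
    using block_inj[OF w' w] by blast
  show "length (?L w') \<le> deg w'" using shw'(1) cap by auto
  show "?m (sh w') = int (length (?L w'))"
  proof (cases "w' = w")
    case True then show ?thesis by simp
  next
    case False
    have "sh w' \<noteq> sh w"
    proof
      assume "sh w' = sh w" then have "off w' + 0 = off w + 0" by simp
      from ne[OF this] False show False by simp
    qed
    moreover have "sh w' \<noteq> sh w + 1 + ?c"
    proof
      assume "sh w' = sh w + 1 + ?c" then have "off w' + 0 = off w + (1 + ?c)" by simp
      from ne[OF this] False cap show False by simp
    qed
    ultimately show ?thesis using False shw'(2) by simp
  qed
  fix k assume k: "k < length (?L w')"
  show "?m (sh w' + 1 + k) = int (?L w' ! k)"
  proof (cases "w' = w")
    case True
    have a1: "sh w + 1 + k \<noteq> sh w" by simp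
    show ?thesis
    proof (cases "k = ?c")
      case True then show ?thesis using \<open>w' = w\<close> by (simp add: nth_append)
    next
      case False
      then have "k < ?c" using k True by simp
      then show ?thesis using True a1 False shw'(3)[of k] by (simp add: nth_append)
    qed
  next
    case False
    have kk: "k < length (Ls w')" using k False by simp
    have "sh w' + 1 + k \<noteq> sh w"
    proof
      assume "sh w' + 1 + k = sh w" then have "off w' + (1 + k) = off w + 0" by simp
      from ne[OF this] False kk shw'(1) show False by simp
    qed
    moreover have "sh w' + 1 + k \<noteq> sh w + 1 + ?c"
    proof
      assume "sh w' + 1 + k = sh w + 1 + ?c" then have "off w' + (1 + k) = off w + (1 + ?c)" by simp
      from ne[OF this] False kk cap shw'(1) show False by simp
    qed
    ultimately show ?thesis using False shw'(3)[OF kk] by simp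
  qed
qed

lemma dat_hi: "X + n \<le> a \<Longrightarrow> dat (m(a := x)) = dat m"
proof -
  assume a: "X + n \<le> a"
  have ne: "off v + k \<noteq> a" if "v < n" "k \<le> deg v" for v k using off_lt_E[OF that] E_le_X a by simp
  have ne0: "off v \<noteq> a" if "v < n" for v using ne[OF that, of 0] by simp
  have ne1: "off v + 1 + k \<noteq> a" if "v < n" "k < deg v" for v k using ne[OF that(1), of "1+k"] that(2) by (simp add: add.assoc)
  show ?thesis unfolding dat_def using ne0 ne1 by auto
qed
lemma offt_hi: "X + n \<le> a \<Longrightarrow> offt (m(a := x)) = offt m"
  unfolding offt_def by auto

lemma agree_upd2: "agree m1 m2 \<Longrightarrow> (\<forall>a. notreg a \<longrightarrow> m3 a = (m2(e := x, s := y)) a) \<Longrightarrow> agree (m1(e := x, s := y)) m3"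
  unfolding agree_def by auto
lemma agree_upd1: "agree m1 m2 \<Longrightarrow> (\<forall>a. notreg a \<longrightarrow> m3 a = (m2(s := y)) a) \<Longrightarrow> agree (m1(s := y)) m3"
  unfolding agree_def by auto
lemma agree_ex: "(\<forall>a. notreg a \<longrightarrow> m' a = m a) = agree m m'" unfolding agree_def by simp

lemma sh_VM: "w < n \<Longrightarrow> k \<le> deg w \<Longrightarrow> sh w + k \<le> VM"
  using sh_lt[of w k] unfolding VM_def by simp
lemma X_VM: "w < n \<Longrightarrow> X + w \<le> VM"
  using X_pos n_lt_E unfolding VM_def by simp
lemma off_VM: "v < n \<Longrightarrow> k \<le> deg v \<Longrightarrow> off v + k \<le> VM"
  using off_lt_E[of v k] E_le_VM by simp

lemma W_ne:
  assumes u: "u < n" and i: "i < deg u" and vd: "v = adj ! u ! i" and j: "j < deg v" and wd: "w = adj ! v ! j"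
    and wu: "w \<noteq> u"
    and mI: "mainI m" and r12: "m (r+12) = int u" and r16: "m (r+16) = int v"
    and r18: "m (r+18) = int (off v + deg v + 1)" and r19: "m (r+19) = int (off v + 1 + j)"
    and sh: "shad m (LsW u i j)"
  shows "\<exists>k m'. runsF \<lparr>pc = b+61, mem = m, outp = oo\<rparr> k
      \<lparr>pc = b+61, mem = m', outp = oo @ enc4 (outW adj u (take i (adj ! u)) v w)\<rparr>
    \<and> k \<le> costW adj u (take i (adj ! u)) w \<and> mainI m' \<and> shad m' (LsW u i (Suc j))
    \<and> m' (r+19) = int (off v + 1 + Suc j)
    \<and> (\<forall>j'<25. j' \<notin> {10, 11, 19, 20, 21, 22, 23, 24} \<longrightarrow> m' (r+j') = m (r+j'))"
proof -
  have vn: "v < n" using vd u i vf(2)[OF u] by simp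
  have wn: "w < n" using wd vn j vf(2)[OF vn] by simp
  let ?vs = "take i (adj ! u)"
  let ?L = "LsW u i j w"
  define c where "c = length ?L"
  have Lcur: "?L = Lw adj u ?vs w" using LsW_cur[of u i j w] u i j wd vd by simp
  have cap: "c < deg w" unfolding c_def using LsW_cap_lt[of u i j w] u i j wd vd wu by simp
  have dm: "dat m" "offt m" and rg: "m (r+3) = 0" "m (r+4) = 1" "m (r+5) = int n" "m (r+6) = int X"
    "m (r+7) = int Dn" using mI unfolding mainI_def by auto
  have nq: "notreg (off v + 1 + j)" using notreg_data[of v "1 + j"] vn j by (simp add: add.assoc)
  have mq: "m (off v + 1 + j) = int w" using datD(2)[OF dm(1) vn j] wd by simp
  have mX: "m (X + w) = int (off w)" using offtD[OF dm(2) wn] .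
  have msh: "m (sh w) = int c" using sh wn unfolding shad_def c_def by auto
  have msh2: "\<And>k. k < c \<Longrightarrow> m (sh w + 1 + k) = int (?L ! k)" using sh wn unfolding shad_def c_def by auto
  have b1: "off v + deg v + 1 \<le> VM" using off_VM[OF vn, of "deg v"] off_lt_E[OF vn, of "deg v"] E_le_VM by simp
  have b2: "sh w + 1 + c \<le> VM" using sh_VM[OF wn, of "1 + c"] cap by (simp add: add.assoc)
  have b3: "X + w \<le> VM" using X_VM[OF wn] .
  have b4: "u \<le> VM" "w \<le> VM" using u wn n_le_VM by auto
  have ql: "off v + 1 + j < off v + deg v + 1" using j by simp
  obtain k1 m1 where e: "runsF \<lparr>pc = b+61, mem = m, outp = oo\<rparr> k1 \<lparr>pc = b+73, mem = m1, outp = oo\<rparr>" "k1 \<le> 12"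
    "agree m m1" "m1 (r+20) = int w" "m1 (r+21) = int (sh w)" "m1 (r+22) = int c"
    "m1 (r+23) = int (sh w + 1)" "m1 (r+24) = int (sh w + 1 + c)"
    "\<forall>j'<25. j' \<notin> {10, 11, 20, 21, 22, 23, 24} \<longrightarrow> m1 (r+j') = m (r+j')"
    using W_enter[where m=m and u=u and ev="off v + deg v + 1" and ?q2.0="off v + 1 + j" and w=w and c=c and oo=oo]
      rg r12 r18 r19 ql nq mq wu wn b1 b2 b3 b4 mX msh unfolding agree_ex by blast
  define IK where "IK k cf \<longleftrightarrow> pc cf = b+73 \<and> outp cf = oo @ enc4 (map (\<lambda>v'. (u, v', w, v)) (take k ?L))
     \<and> agree m1 (mem cf) \<and> (\<forall>j'<25. j' \<notin> {10, 23} \<longrightarrow> mem cf (r+j') = m1 (r+j'))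
     \<and> mem cf (r+23) = int (sh w + 1 + k)" for k and cf :: conf
  have KL: "\<exists>k cf. runsF \<lparr>pc = b+73, mem = m1, outp = oo\<rparr> k cf \<and> k \<le> (\<Sum>k\<leftarrow>[0..<c]. 9) \<and> IK c cf"
  proof (rule loop_gen[where Inv = IK])
    fix k cf assume k: "k < c" and I: "IK k cf"
    have ceq: "\<lparr>pc = b+73, mem = mem cf, outp = outp cf\<rparr> = cf" using I unfolding IK_def by (metis conf_eta)
    have ag: "agree m (mem cf)" using agree_trans e(3) I unfolding IK_def by blast
    have nq2: "notreg (sh w + 1 + k)" using notreg_sh[OF wn, of "1 + k"] by (simp add: add.assoc)
    have mq2: "mem cf (sh w + 1 + k) = int (?L ! k)" using ag nq2 msh2[OF k] unfolding agree_def by simp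
    have regs: "mem cf (r+4) = 1" "mem cf (r+12) = int u" "mem cf (r+16) = int v" "mem cf (r+20) = int w"
      "mem cf (r+24) = int (sh w + 1 + c)"
      using I e(4,8,9) rg r12 r16 unfolding IK_def by auto
    obtain k' m' where kb: "runsF \<lparr>pc = b+73, mem = mem cf, outp = outp cf\<rparr> k'
        \<lparr>pc = b+73, mem = m', outp = outp cf @ [int u, int (?L ! k), int w, int v]\<rparr>" "k' \<le> 9"
        "agree (mem cf) m'" "m' (r+23) = int (sh w + 1 + k + 1)"
        "\<forall>j'<25. j' \<noteq> 10 \<longrightarrow> j' \<noteq> 23 \<longrightarrow> m' (r+j') = mem cf (r+j')"
      using K_body[where m="mem cf" and u=u and v=v and w=w and q="sh w + 1 + k" and e="sh w + 1 + c"
          and x="?L ! k" and oo="outp cf"] regs I k nq2 mq2 b2 unfolding IK_def agree_ex by auto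
    have "outp cf @ [int u, int (?L ! k), int w, int v] = oo @ enc4 (map (\<lambda>v'. (u, v', w, v)) (take (Suc k) ?L))"
      using I k unfolding IK_def c_def by (simp add: take_Suc_conv_app_nth)
    then show "\<exists>k' cf'. runsF cf k' cf' \<and> k' \<le> 9 \<and> IK (Suc k) cf'"
      using kb(1)[unfolded ceq] kb(2-) I agree_trans[of m1 "mem cf" m'] unfolding IK_def
      by (intro exI[of _ k'] exI[of _ "\<lparr>pc = b+73, mem = m', outp = outp cf @ [int u, int (?L ! k), int w, int v]\<rparr>"]) auto
  qed (use e in \<open>auto simp: IK_def\<close>)
  then obtain k2 cf2 where K: "runsF \<lparr>pc = b+73, mem = m1, outp = oo\<rparr> k2 cf2" "k2 \<le> 9 * c" "IK c cf2"
    by (auto simp: sum_list_triv)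
  have ceq2: "\<lparr>pc = b+73, mem = mem cf2, outp = outp cf2\<rparr> = cf2" using K(3) unfolding IK_def by (metis conf_eta)
  have ag2: "agree m (mem cf2)" using agree_trans e(3) K(3) unfolding IK_def by blast
  have regs2: "mem cf2 (r+4) = 1" "mem cf2 (r+16) = int v" "mem cf2 (r+21) = int (sh w)" "mem cf2 (r+22) = int c"
      "mem cf2 (r+23) = int (sh w + 1 + c)" "mem cf2 (r+24) = int (sh w + 1 + c)" "mem cf2 (r+19) = int (off v + 1 + j)"
    using K(3) e rg r16 r19 unfolding IK_def by auto
  have ns: "notreg (sh w)" "notreg (sh w + 1 + c)" using notreg_sh[OF wn, of 0] notreg_sh[OF wn, of "1 + c"]
    by (simp_all add: add.assoc)
  have b5: "c \<le> VM" "off v + 1 + j \<le> VM" using b2 b1 j by auto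
  obtain k3 m3 where x: "runsF \<lparr>pc = b+73, mem = mem cf2, outp = outp cf2\<rparr> k3 \<lparr>pc = b+61, mem = m3, outp = outp cf2\<rparr>"
    "k3 \<le> 8" "\<forall>a. notreg a \<longrightarrow> m3 a = ((mem cf2)(sh w + 1 + c := int v, sh w := int (c+1))) a"
    "m3 (r+22) = int (c+1)" "m3 (r+19) = int (off v + 1 + j + 1)"
    "\<forall>j'<25. j' \<noteq> 10 \<longrightarrow> j' \<noteq> 22 \<longrightarrow> j' \<noteq> 19 \<longrightarrow> m3 (r+j') = mem cf2 (r+j')"
    using K_exit[where m="mem cf2" and v=v and s="sh w" and c=c and e="sh w + 1 + c" and ?q2.0="off v + 1 + j"
        and oo="outp cf2"] regs2 b2 b5 ns by blast
  have ag3: "agree (m(sh w + 1 + c := int v, sh w := int (c+1))) m3" by (rule agree_upd2[OF ag2 x(3)])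
  have hi: "X + n \<le> sh w" "X + n \<le> sh w + 1 + c" using sh_ge[OF wn, of 0] sh_ge[OF wn, of "1 + c"] by (simp_all add: add.assoc)
  have "dat (m(sh w + 1 + c := int v, sh w := int (c+1)))" "offt (m(sh w + 1 + c := int v, sh w := int (c+1)))"
    using dm hi dat_hi offt_hi by simp_all
  then have dm3: "dat m3" "offt m3" using ag3 dat_agree offt_agree by blast+
  have shu: "shad (m(sh w + 1 + c := int v, sh w := int (c+1))) (LsW u i (Suc j))"
    using shad_upd[OF sh wn cap[unfolded c_def], of v] LsW_step_ne[of u i j w] u i j wd vd wu unfolding c_def by simp
  have sh3: "shad m3 (LsW u i (Suc j))" using shad_agree[OF ag3 shu] .
  have pres: "\<forall>j'<25. j' \<notin> {10, 11, 19, 20, 21, 22, 23, 24} \<longrightarrow> m3 (r+j') = m (r+j')"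
    using x(6) K(3) e(9) unfolding IK_def by auto
  have mI3: "mainI m3" using dm3 pres rg unfolding mainI_def by auto
  have outeq: "outp cf2 = oo @ enc4 (outW adj u ?vs v w)" using K(3) Lcur unfolding IK_def outW_def c_def by simp
  have run: "runsF \<lparr>pc = b+61, mem = m, outp = oo\<rparr> (k1 + k2 + k3) \<lparr>pc = b+61, mem = m3, outp = outp cf2\<rparr>"
    using runsF_trans[OF runsF_trans[OF e(1) K(1)] x(1)[unfolded ceq2]] .
  have cost: "k1 + k2 + k3 \<le> costW adj u ?vs w" unfolding costW_def using e(2) K(2) x(2) Lcur c_def by simp
  show ?thesis using run cost mI3 sh3 x(5) pres outeq
    by (intro exI[of _ "k1 + k2 + k3"] exI[of _ m3]) auto
qed

lemma W_eq:
  assumes u: "u < n" and i: "i < deg u" and vd: "v = adj ! u ! i" and j: "j < deg v" and wd: "w = adj ! v ! j"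
    and wu: "w = u"
    and mI: "mainI m" and r12: "m (r+12) = int u" and r16: "m (r+16) = int v"
    and r18: "m (r+18) = int (off v + deg v + 1)" and r19: "m (r+19) = int (off v + 1 + j)"
    and sh: "shad m (LsW u i j)"
  shows "\<exists>k m'. runsF \<lparr>pc = b+61, mem = m, outp = oo\<rparr> k
      \<lparr>pc = b+61, mem = m', outp = oo @ enc4 (outW adj u (take i (adj ! u)) v w)\<rparr>
    \<and> k \<le> costW adj u (take i (adj ! u)) w \<and> mainI m' \<and> shad m' (LsW u i (Suc j))
    \<and> m' (r+19) = int (off v + 1 + Suc j)
    \<and> (\<forall>j'<25. j' \<notin> {10, 11, 19, 20, 21, 22, 23, 24} \<longrightarrow> m' (r+j') = m (r+j'))"
proof -
  have vn: "v < n" using vd u i vf(2)[OF u] by simp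
  have dm: "dat m" "offt m" and rg: "m (r+3) = 0" "m (r+4) = 1" "m (r+5) = int n" "m (r+6) = int X"
    "m (r+7) = int Dn" using mI unfolding mainI_def by auto
  have nq: "notreg (off v + 1 + j)" using notreg_data[of v "1 + j"] vn j by (simp add: add.assoc)
  have mq: "m (off v + 1 + j) = int w" using datD(2)[OF dm(1) vn j] wd by simp
  have b1: "off v + deg v + 1 \<le> VM" using off_lt_E[OF vn, of "deg v"] E_le_VM by simp
  have ql: "off v + 1 + j < off v + deg v + 1" using j by simp
  obtain k1 m1 where e: "runsF \<lparr>pc = b+61, mem = m, outp = oo\<rparr> k1 \<lparr>pc = b+61, mem = m1, outp = oo\<rparr>" "k1 \<le> 7"
    "agree m m1" "m1 (r+19) = int (off v + 1 + j + 1)" "m1 (r+20) = int w"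
    "\<forall>j'<25. j' \<noteq> 10 \<longrightarrow> j' \<noteq> 19 \<longrightarrow> j' \<noteq> 20 \<longrightarrow> m1 (r+j') = m (r+j')"
    using W_skip[where m=m and u=u and ev="off v + deg v + 1" and ?q2.0="off v + 1 + j" and w=w and oo=oo]
      rg r12 r18 r19 ql nq mq wu b1 unfolding agree_ex by blast
  have "outW adj u (take i (adj ! u)) v w = []" using wu unfolding outW_def Lw_def by simp
  moreover have "LsW u i (Suc j) = LsW u i j" using LsW_step_eq[of u i j] u i j wd vd wu by simp
  moreover have "mainI m1" using e(3,6) dm rg dat_agree offt_agree unfolding mainI_def by auto
  moreover have "shad m1 (LsW u i j)" using shad_agree[OF e(3) sh] .
  moreover have "k1 \<le> costW adj u (take i (adj ! u)) w" using e(2) unfolding costW_def by simp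
  ultimately show ?thesis using e(1,4,6)
    by (intro exI[of _ k1] exI[of _ m1]) auto
qed

lemma map_nth_f: "map (\<lambda>j. f (xs ! j)) [0..<length xs] = map f xs"
  by (rule nth_equalityI) auto

lemma V_iter:
  assumes u: "u < n" and i: "i < deg u"
    and mI: "mainI m" and r12: "m (r+12) = int u" and r14: "m (r+14) = int (off u + deg u + 1)"
    and r15: "m (r+15) = int (off u + 1 + i)"
    and sh: "shad m (Lw adj u (take i (adj ! u)))"
  shows "\<exists>k m'. runsF \<lparr>pc = b+51, mem = m, outp = oo\<rparr> k
      \<lparr>pc = b+51, mem = m', outp = oo @ enc4 (outV adj u (take i (adj ! u)) (adj ! u ! i))\<rparr>
    \<and> k \<le> costV adj u (take i (adj ! u)) (adj ! u ! i) \<and> mainI m' \<and> shad m' (Lw adj u (take (Suc i) (adj ! u)))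
    \<and> m' (r+15) = int (off u + 1 + Suc i) \<and> m' (r+12) = int u \<and> m' (r+14) = int (off u + deg u + 1)"
proof -
  define v where "v = adj ! u ! i"
  let ?vs = "take i (adj ! u)"
  have vn: "v < n" using v_def u i vf(2)[OF u] by simp
  have dm: "dat m" "offt m" and rg: "m (r+3) = 0" "m (r+4) = 1" "m (r+5) = int n" "m (r+6) = int X"
    "m (r+7) = int Dn" using mI unfolding mainI_def by auto
  have nq: "notreg (off u + 1 + i)" using notreg_data[of u "1 + i"] u i by (simp add: add.assoc)
  have mq: "m (off u + 1 + i) = int v" using datD(2)[OF dm(1) u i] v_def by simp
  have mX: "m (X + v) = int (off v)" using offtD[OF dm(2) vn] .
  have mo: "m (off v) = int (deg v)" using datD(1)[OF dm(1) vn] .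
  have b1: "off u + deg u + 1 \<le> VM" using off_lt_E[OF u, of "deg u"] E_le_VM by simp
  have b3: "X + v \<le> VM" using X_VM[OF vn] .
  have ql: "off u + 1 + i < off u + deg u + 1" using i by simp
  obtain k1 m1 where e: "runsF \<lparr>pc = b+51, mem = m, outp = oo\<rparr> k1 \<lparr>pc = b+61, mem = m1, outp = oo\<rparr>" "k1 \<le> 10"
    "agree m m1" "m1 (r+16) = int v" "m1 (r+17) = int (off v)"
    "m1 (r+18) = int (off v + deg v + 1)" "m1 (r+19) = int (off v + 1)"
    "\<forall>j'<25. j' \<notin> {10, 11, 16, 17, 18, 19} \<longrightarrow> m1 (r+j') = m (r+j')"
    using V_enter[where m=m and eu="off u + deg u + 1" and q="off u + 1 + i" and v=v and oo=oo]
      rg r14 r15 ql nq mq vn mX mo b1 b3 unfolding agree_ex by blast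
  have mI1: "mainI m1" using e(3,8) dm rg dat_agree offt_agree unfolding mainI_def by auto
  define IW where "IW j cf \<longleftrightarrow> pc cf = b+61 \<and> outp cf = oo @ enc4 (concat (map (outW adj u ?vs v) (take j (adj ! v))))
     \<and> mainI (mem cf) \<and> shad (mem cf) (LsW u i j) \<and> mem cf (r+19) = int (off v + 1 + j)
     \<and> mem cf (r+12) = int u \<and> mem cf (r+14) = int (off u + deg u + 1) \<and> mem cf (r+15) = int (off u + 1 + i)
     \<and> mem cf (r+16) = int v \<and> mem cf (r+18) = int (off v + deg v + 1)" for j and cf :: conf
  have WL: "\<exists>k cf. runsF \<lparr>pc = b+61, mem = m1, outp = oo\<rparr> k cf
      \<and> k \<le> (\<Sum>j\<leftarrow>[0..<deg v]. costW adj u ?vs (adj ! v ! j)) \<and> IW (deg v) cf"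
  proof (rule loop_gen[where Inv = IW])
    fix j cf assume j: "j < deg v" and I: "IW j cf"
    have ceq: "\<lparr>pc = b+61, mem = mem cf, outp = outp cf\<rparr> = cf" using I unfolding IW_def by (metis conf_eta)
    have regs: "mem cf (r+12) = int u" "mem cf (r+16) = int v" "mem cf (r+18) = int (off v + deg v + 1)"
      using I unfolding IW_def by auto
    have pre: "mainI (mem cf)" "mem cf (r+19) = int (off v + 1 + j)" "shad (mem cf) (LsW u i j)"
      using I unfolding IW_def by auto
    obtain k' m' where wb: "runsF \<lparr>pc = b+61, mem = mem cf, outp = outp cf\<rparr> k'
      \<lparr>pc = b+61, mem = m', outp = outp cf @ enc4 (outW adj u ?vs v (adj ! v ! j))\<rparr>"
      "k' \<le> costW adj u ?vs (adj ! v ! j)" "mainI m'" "shad m' (LsW u i (Suc j))"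
      "m' (r+19) = int (off v + 1 + Suc j)"
      "\<forall>j'<25. j' \<notin> {10, 11, 19, 20, 21, 22, 23, 24} \<longrightarrow> m' (r+j') = mem cf (r+j')"
    proof (cases "adj ! v ! j = u")
      case True
      then show ?thesis using that W_eq[where u=u and i=i and v=v and j=j and w="adj ! v ! j" and m="mem cf" and oo="outp cf"]
        u i v_def j regs pre by blast
    next
      case False
      then show ?thesis using that W_ne[where u=u and i=i and v=v and j=j and w="adj ! v ! j" and m="mem cf" and oo="outp cf"]
        u i v_def j regs pre by blast
    qed
    have pres: "m' (r+12) = mem cf (r+12)" "m' (r+14) = mem cf (r+14)" "m' (r+15) = mem cf (r+15)"
      "m' (r+16) = mem cf (r+16)" "m' (r+18) = mem cf (r+18)" using wb(6) by auto
    have "outp cf @ enc4 (outW adj u ?vs v (adj ! v ! j)) = oo @ enc4 (concat (map (outW adj u ?vs v) (take (Suc j) (adj ! v))))"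
      using I j unfolding IW_def by (simp add: take_Suc_conv_app_nth)
    then show "\<exists>k' cf'. runsF cf k' cf' \<and> k' \<le> costW adj u ?vs (adj ! v ! j) \<and> IW (Suc j) cf'"
      using wb(1)[unfolded ceq] wb(2-5) pres I unfolding IW_def
      by (intro exI[of _ k'] exI[of _ "\<lparr>pc = b+61, mem = m', outp = outp cf @ enc4 (outW adj u ?vs v (adj ! v ! j))\<rparr>"]) auto
  next
    have "m1 (r+12) = int u" "m1 (r+14) = int (off u + deg u + 1)" "m1 (r+15) = int (off u + 1 + i)"
      using e(8) r12 r14 r15 by auto
    then show "IW 0 \<lparr>pc = b+61, mem = m1, outp = oo\<rparr>"
      using e mI1 shad_agree[OF e(3) sh] LsW_0[of u i] unfolding IW_def by auto
  qed simp
  then obtain k2 cf2 where W: "runsF \<lparr>pc = b+61, mem = m1, outp = oo\<rparr> k2 cf2"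
    "k2 \<le> (\<Sum>j\<leftarrow>[0..<deg v]. costW adj u ?vs (adj ! v ! j))" "IW (deg v) cf2" by blast
  have ceq2: "\<lparr>pc = b+61, mem = mem cf2, outp = outp cf2\<rparr> = cf2" using W(3) unfolding IW_def by (metis conf_eta)
  have regs2: "mem cf2 (r+4) = 1" "mem cf2 (r+18) = int (off v + deg v + 1)" "mem cf2 (r+19) = int (off v + deg v + 1)"
    "mem cf2 (r+15) = int (off u + 1 + i)"
    using W(3) unfolding IW_def mainI_def by auto
  have b5: "off u + 1 + i \<le> VM" "off v + deg v + 1 \<le> VM" using b1 i off_lt_E[OF vn, of "deg v"] E_le_VM by auto
  obtain k3 m3 where x: "runsF \<lparr>pc = b+61, mem = mem cf2, outp = outp cf2\<rparr> k3 \<lparr>pc = b+51, mem = m3, outp = outp cf2\<rparr>"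
    "k3 \<le> 5" "agree (mem cf2) m3" "m3 (r+15) = int (off u + 1 + i + 1)"
    "\<forall>j'<25. j' \<noteq> 10 \<longrightarrow> j' \<noteq> 15 \<longrightarrow> m3 (r+j') = mem cf2 (r+j')"
    using W_exit[where m="mem cf2" and ev="off v + deg v + 1" and q="off u + 1 + i" and oo="outp cf2"]
      regs2 b5 unfolding agree_ex by blast
  have dm2: "dat (mem cf2)" "offt (mem cf2)" "shad (mem cf2) (LsW u i (deg v))" using W(3) unfolding IW_def mainI_def by auto
  have mI3: "mainI m3" using W(3) x(3,5) dm2 dat_agree offt_agree unfolding IW_def mainI_def by auto
  have sh3: "shad m3 (Lw adj u (take (Suc i) (adj ! u)))"
    using shad_agree[OF x(3) dm2(3)] LsW_end[OF i] v_def by simp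
  have r3: "m3 (r+12) = int u" "m3 (r+14) = int (off u + deg u + 1)" using x(5) W(3) unfolding IW_def by auto
  have outeq: "outp cf2 = oo @ enc4 (outV adj u ?vs v)" using W(3) unfolding IW_def outV_def by simp
  have run: "runsF \<lparr>pc = b+51, mem = m, outp = oo\<rparr> (k1 + k2 + k3) \<lparr>pc = b+51, mem = m3, outp = outp cf2\<rparr>"
    using runsF_trans[OF runsF_trans[OF e(1) W(1)] x(1)[unfolded ceq2]] .
  have "(\<Sum>j\<leftarrow>[0..<deg v]. costW adj u ?vs (adj ! v ! j)) = sum_list (map (costW adj u ?vs) (adj ! v))"
    using map_nth_f[of "costW adj u ?vs" "adj ! v"] by simp
  then have cost: "k1 + k2 + k3 \<le> costV adj u ?vs v" unfolding costV_def using e(2) W(2) x(2) by simp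
  show ?thesis using run cost mI3 sh3 x(4) r3 outeq unfolding v_def
    by (intro exI[of _ "k1 + k2 + k3"] exI[of _ m3]) auto
qed

lemma sh_inj: "w < n \<Longrightarrow> w' < n \<Longrightarrow> sh w = sh w' \<Longrightarrow> w = w'"
  using block_inj[of w w' 0 0] by simp

lemma U_iter:
  assumes u: "u < n" and mI: "mainI m" and r12: "m (r+12) = int u"
  shows "\<exists>k m'. runsF \<lparr>pc = b+32, mem = m, outp = oo\<rparr> k
      \<lparr>pc = b+32, mem = m', outp = oo @ enc4 (outU adj u)\<rparr>
    \<and> k \<le> costU adj u \<and> mainI m' \<and> m' (r+12) = int (Suc u)"
proof -
  have dm: "dat m" "offt m" and rg: "m (r+3) = 0" "m (r+4) = 1" "m (r+5) = int n" "m (r+6) = int X"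
    "m (r+7) = int Dn" using mI unfolding mainI_def by auto
  obtain k1 m1 where e: "runsF \<lparr>pc = b+32, mem = m, outp = oo\<rparr> k1 \<lparr>pc = b+36, mem = m1, outp = oo\<rparr>" "k1 \<le> 3"
    "agree m m1" "m1 (r+9) = int 0" "\<forall>j'<25. j' \<noteq> 10 \<longrightarrow> j' \<noteq> 9 \<longrightarrow> m1 (r+j') = m (r+j')"
    using U_head[where m=m and u=u and oo=oo] rg r12 u unfolding agree_ex by blast
  have mI1: "mainI m1" using e(3,5) dm rg dat_agree offt_agree unfolding mainI_def by auto
  define IR where "IR i cf \<longleftrightarrow> pc cf = b+36 \<and> outp cf = oo \<and> mainI (mem cf) \<and> mem cf (r+9) = int i
     \<and> mem cf (r+12) = int u \<and> (\<forall>w<i. mem cf (sh w) = 0)" for i and cf :: conf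
  have RL: "\<exists>k cf. runsF \<lparr>pc = b+36, mem = m1, outp = oo\<rparr> k cf \<and> k \<le> (\<Sum>i\<leftarrow>[0..<n]. 8) \<and> IR n cf"
  proof (rule loop_gen[where Inv = IR])
    fix i cf assume i: "i < n" and I: "IR i cf"
    have ceq: "\<lparr>pc = b+36, mem = mem cf, outp = outp cf\<rparr> = cf" using I unfolding IR_def by (metis conf_eta)
    have mc: "mainI (mem cf)" using I unfolding IR_def by simp
    have dmc: "dat (mem cf)" "offt (mem cf)" using mc unfolding mainI_def by auto
    have rgc: "mem cf (r+3) = 0" "mem cf (r+4) = 1" "mem cf (r+5) = int n" "mem cf (r+6) = int X"
      "mem cf (r+7) = int Dn" using mc unfolding mainI_def by auto
    obtain k' m' where rb: "runsF \<lparr>pc = b+36, mem = mem cf, outp = outp cf\<rparr> k' \<lparr>pc = b+36, mem = m', outp = outp cf\<rparr>"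
      "k' \<le> 8" "\<forall>a. notreg a \<longrightarrow> m' a = ((mem cf)(sh i := 0)) a" "m' (r+9) = int (i+1)"
      "\<forall>j'<25. j' \<notin> {9, 10, 11} \<longrightarrow> m' (r+j') = mem cf (r+j')"
      using R_body[where m="mem cf" and i=i and oo="outp cf"] rgc I i offtD[OF dmc(2) i] X_VM[OF i] sh_VM[OF i, of 0]
      unfolding IR_def by auto
    have ag: "agree ((mem cf)(sh i := 0)) m'" using rb(3) unfolding agree_def by blast
    have hi: "X + n \<le> sh i" using sh_ge[OF i, of 0] by simp
    have "dat ((mem cf)(sh i := 0))" "offt ((mem cf)(sh i := 0))" using dmc hi dat_hi offt_hi by simp_all
    then have dm': "dat m'" "offt m'" using ag dat_agree offt_agree by blast+
    have pres: "m' (r+3) = 0" "m' (r+4) = 1" "m' (r+5) = int n" "m' (r+6) = int X" "m' (r+7) = int Dn"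
      "m' (r+12) = int u" using rb(5) rgc I unfolding IR_def by auto
    have z: "\<forall>w<Suc i. m' (sh w) = 0"
    proof (intro allI impI)
      fix w assume w: "w < Suc i"
      have "notreg (sh w)" using notreg_sh[of w 0] w i by simp
      then have "m' (sh w) = ((mem cf)(sh i := 0)) (sh w)" using rb(3) by blast
      then show "m' (sh w) = 0" using I w sh_inj[of w i] i unfolding IR_def by (cases "w = i") auto
    qed
    show "\<exists>k' cf'. runsF cf k' cf' \<and> k' \<le> 8 \<and> IR (Suc i) cf'"
      using rb(1)[unfolded ceq] rb(2,4) dm' pres z I unfolding IR_def mainI_def
      by (intro exI[of _ k'] exI[of _ "\<lparr>pc = b+36, mem = m', outp = outp cf\<rparr>"]) auto
  next
    show "IR 0 \<lparr>pc = b+36, mem = m1, outp = oo\<rparr>" using mI1 e(4,5) r12 unfolding IR_def by auto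
  qed simp
  then obtain k2 cf2 where R: "runsF \<lparr>pc = b+36, mem = m1, outp = oo\<rparr> k2 cf2" "k2 \<le> 8 * n" "IR n cf2"
    by (auto simp: sum_list_triv)
  have ceq2: "\<lparr>pc = b+36, mem = mem cf2, outp = outp cf2\<rparr> = cf2" using R(3) unfolding IR_def by (metis conf_eta)
  have mc2: "mainI (mem cf2)" using R(3) unfolding IR_def by simp
  have dm2: "dat (mem cf2)" "offt (mem cf2)" using mc2 unfolding mainI_def by auto
  have rg2: "mem cf2 (r+4) = 1" "mem cf2 (r+5) = int n" "mem cf2 (r+6) = int X" "mem cf2 (r+9) = int n"
     "mem cf2 (r+12) = int u" using mc2 R(3) unfolding mainI_def IR_def by auto
  obtain k3 m3 where x: "runsF \<lparr>pc = b+36, mem = mem cf2, outp = outp cf2\<rparr> k3 \<lparr>pc = b+51, mem = m3, outp = outp cf2\<rparr>"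
    "k3 \<le> 9" "agree (mem cf2) m3" "m3 (r+13) = int (off u)" "m3 (r+14) = int (off u + deg u + 1)"
    "m3 (r+15) = int (off u + 1)" "\<forall>j'<25. j' \<notin> {10, 11, 13, 14, 15} \<longrightarrow> m3 (r+j') = mem cf2 (r+j')"
    using R_exit[where m="mem cf2" and u=u and oo="outp cf2"] rg2 u offtD[OF dm2(2) u] datD(1)[OF dm2(1) u] X_VM[OF u]
    unfolding agree_ex by blast
  have mI3: "mainI m3" using x(3,7) mc2 dat_agree offt_agree unfolding mainI_def by auto
  have sh3: "shad m3 (Lw adj u (take 0 (adj ! u)))"
  proof -
    have "shad (mem cf2) (\<lambda>_. [])" using R(3) unfolding IR_def shad_def by auto
    moreover have "Lw adj u (take 0 (adj ! u)) = (\<lambda>_. [])" unfolding Lw_def by auto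
    ultimately show ?thesis using shad_agree[OF x(3)] by simp
  qed
  define IV where "IV i cf \<longleftrightarrow> pc cf = b+51
     \<and> outp cf = outp cf2 @ enc4 (concat (map (\<lambda>i'. outV adj u (take i' (adj ! u)) (adj ! u ! i')) [0..<i]))
     \<and> mainI (mem cf) \<and> shad (mem cf) (Lw adj u (take i (adj ! u)))
     \<and> mem cf (r+15) = int (off u + 1 + i) \<and> mem cf (r+12) = int u \<and> mem cf (r+14) = int (off u + deg u + 1)"
    for i and cf :: conf
  have VL: "\<exists>k cf. runsF \<lparr>pc = b+51, mem = m3, outp = outp cf2\<rparr> k cf
     \<and> k \<le> (\<Sum>i\<leftarrow>[0..<deg u]. costV adj u (take i (adj ! u)) (adj ! u ! i)) \<and> IV (deg u) cf"
  proof (rule loop_gen[where Inv = IV])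
    fix i cf assume i: "i < deg u" and I: "IV i cf"
    have ceq: "\<lparr>pc = b+51, mem = mem cf, outp = outp cf\<rparr> = cf" using I unfolding IV_def by (metis conf_eta)
    obtain k' m' where vb: "runsF \<lparr>pc = b+51, mem = mem cf, outp = outp cf\<rparr> k'
      \<lparr>pc = b+51, mem = m', outp = outp cf @ enc4 (outV adj u (take i (adj ! u)) (adj ! u ! i))\<rparr>"
      "k' \<le> costV adj u (take i (adj ! u)) (adj ! u ! i)" "mainI m'" "shad m' (Lw adj u (take (Suc i) (adj ! u)))"
      "m' (r+15) = int (off u + 1 + Suc i)" "m' (r+12) = int u" "m' (r+14) = int (off u + deg u + 1)"
      using V_iter[where u=u and i=i and m="mem cf" and oo="outp cf"] u i I unfolding IV_def by blast
    show "\<exists>k' cf'. runsF cf k' cf' \<and> k' \<le> costV adj u (take i (adj ! u)) (adj ! u ! i) \<and> IV (Suc i) cf'"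
      using vb(1)[unfolded ceq] vb(2-) I unfolding IV_def
      by (intro exI[of _ k'] exI[of _ "\<lparr>pc = b+51, mem = m', outp = outp cf @ enc4 (outV adj u (take i (adj ! u)) (adj ! u ! i))\<rparr>"]) auto
  next
    show "IV 0 \<lparr>pc = b+51, mem = m3, outp = outp cf2\<rparr>" using mI3 sh3 x(5,6,7) rg2 unfolding IV_def by auto
  qed simp
  then obtain k4 cf4 where V: "runsF \<lparr>pc = b+51, mem = m3, outp = outp cf2\<rparr> k4 cf4"
     "k4 \<le> (\<Sum>i\<leftarrow>[0..<deg u]. costV adj u (take i (adj ! u)) (adj ! u ! i))" "IV (deg u) cf4" by blast
  have ceq4: "\<lparr>pc = b+51, mem = mem cf4, outp = outp cf4\<rparr> = cf4" using V(3) unfolding IV_def by (metis conf_eta)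
  have rg4: "mem cf4 (r+4) = 1" "mem cf4 (r+14) = int (off u + deg u + 1)" "mem cf4 (r+15) = int (off u + deg u + 1)"
    "mem cf4 (r+12) = int u" using V(3) unfolding IV_def mainI_def by auto
  have b1: "off u + deg u + 1 \<le> VM" "u \<le> VM" using off_lt_E[OF u, of "deg u"] E_le_VM u n_le_VM by auto
  obtain k5 m5 where y: "runsF \<lparr>pc = b+51, mem = mem cf4, outp = outp cf4\<rparr> k5 \<lparr>pc = b+32, mem = m5, outp = outp cf4\<rparr>"
    "k5 \<le> 5" "agree (mem cf4) m5" "m5 (r+12) = int (u+1)"
    "\<forall>j'<25. j' \<noteq> 10 \<longrightarrow> j' \<noteq> 12 \<longrightarrow> m5 (r+j') = mem cf4 (r+j')"
    using V_exit[where m="mem cf4" and eu="off u + deg u + 1" and u=u and oo="outp cf4"] rg4 b1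
    unfolding agree_ex by blast
  have mI5: "mainI m5" using V(3) y(3,5) dat_agree offt_agree unfolding IV_def mainI_def by auto
  have outeq: "outp cf4 = oo @ enc4 (outU adj u)" using V(3) R(3) unfolding IV_def IR_def outU_def by simp
  have run: "runsF \<lparr>pc = b+32, mem = m, outp = oo\<rparr> (k1 + k2 + k3 + k4 + k5) \<lparr>pc = b+32, mem = m5, outp = outp cf4\<rparr>"
    using runsF_trans[OF runsF_trans[OF runsF_trans[OF runsF_trans[OF e(1) R(1)] x(1)[unfolded ceq2]] V(1)] y(1)[unfolded ceq4]] .
  have cost: "k1 + k2 + k3 + k4 + k5 \<le> costU adj u" unfolding costU_def using e(2) R(2) x(2) V(2) y(2) by simp
  show ?thesis using run cost mI5 y(4) outeq
    by (intro exI[of _ "k1 + k2 + k3 + k4 + k5"] exI[of _ m5]) auto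
qed

theorem gen_run:
  assumes m0: "m 0 = int n" and d0: "dat m"
  shows "\<exists>k m'. runsF \<lparr>pc = b, mem = m, outp = oo\<rparr> k \<lparr>pc = b+92, mem = m', outp = oo @ enc4 (outAll adj)\<rparr>
    \<and> k \<le> costAll adj"
proof -
  have g: "runsF \<lparr>pc = b, mem = m, outp = oo\<rparr> (Suc 0) \<lparr>pc = b+3, mem = m, outp = oo\<rparr>"
    by (rule runF1_0) (simp_all add: gcode_def runF0)
  obtain k1 m1 where p: "runsF \<lparr>pc = b+3, mem = m, outp = oo\<rparr> k1 \<lparr>pc = b+32, mem = m1, outp = oo\<rparr>"
    "k1 \<le> 16 * n + 17" "mainI m1" "m1 (r+12) = 0" using prelude[OF m0 d0, of oo] by blast
  define IU where "IU u cf \<longleftrightarrow> pc cf = b+32 \<and> outp cf = oo @ enc4 (concat (map (outU adj) [0..<u]))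
     \<and> mainI (mem cf) \<and> mem cf (r+12) = int u" for u and cf :: conf
  have UL: "\<exists>k cf. runsF \<lparr>pc = b+32, mem = m1, outp = oo\<rparr> k cf \<and> k \<le> (\<Sum>u\<leftarrow>[0..<n]. costU adj u) \<and> IU n cf"
  proof (rule loop_gen[where Inv = IU])
    fix u cf assume u: "u < n" and I: "IU u cf"
    have ceq: "\<lparr>pc = b+32, mem = mem cf, outp = outp cf\<rparr> = cf" using I unfolding IU_def by (metis conf_eta)
    obtain k' m' where ub: "runsF \<lparr>pc = b+32, mem = mem cf, outp = outp cf\<rparr> k'
      \<lparr>pc = b+32, mem = m', outp = outp cf @ enc4 (outU adj u)\<rparr>" "k' \<le> costU adj u" "mainI m'" "m' (r+12) = int (Suc u)"
      using U_iter[where u=u and m="mem cf" and oo="outp cf"] u I unfolding IU_def by blast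
    show "\<exists>k' cf'. runsF cf k' cf' \<and> k' \<le> costU adj u \<and> IU (Suc u) cf'"
      using ub(1)[unfolded ceq] ub(2-) I unfolding IU_def
      by (intro exI[of _ k'] exI[of _ "\<lparr>pc = b+32, mem = m', outp = outp cf @ enc4 (outU adj u)\<rparr>"]) auto
  next
    show "IU 0 \<lparr>pc = b+32, mem = m1, outp = oo\<rparr>" using p unfolding IU_def by auto
  qed simp
  then obtain k2 cf2 where U: "runsF \<lparr>pc = b+32, mem = m1, outp = oo\<rparr> k2 cf2"
     "k2 \<le> (\<Sum>u\<leftarrow>[0..<n]. costU adj u)" "IU n cf2" by blast
  have ceq2: "\<lparr>pc = b+32, mem = mem cf2, outp = outp cf2\<rparr> = cf2" using U(3) unfolding IU_def by (metis conf_eta)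
  have rg: "mem cf2 (r+5) = int n" "mem cf2 (r+12) = int n" using U(3) unfolding IU_def mainI_def by auto
  obtain k3 m3 where x: "runsF \<lparr>pc = b+32, mem = mem cf2, outp = outp cf2\<rparr> k3 \<lparr>pc = b+92, mem = m3, outp = outp cf2\<rparr>"
    "k3 \<le> 3" using U_exit[where m="mem cf2" and oo="outp cf2"] rg by blast
  have outeq: "outp cf2 = oo @ enc4 (outAll adj)" using U(3) unfolding IU_def outAll_def by simp
  have run: "runsF \<lparr>pc = b, mem = m, outp = oo\<rparr> (Suc 0 + k1 + k2 + k3) \<lparr>pc = b+92, mem = m3, outp = outp cf2\<rparr>"
    using runsF_trans[OF runsF_trans[OF runsF_trans[OF g p(1)] U(1)] x(1)[unfolded ceq2]] .
  have cost: "Suc 0 + k1 + k2 + k3 \<le> costAll adj" unfolding costAll_def using p(2) U(2) x(2) by simp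
  show ?thesis using run cost outeq by (intro exI[of _ "Suc 0 + k1 + k2 + k3"] exI[of _ m3]) auto
qed

lemma runG: "pc c < length P \<Longrightarrow> P ! pc c \<noteq> Halt \<Longrightarrow> wok (P ! pc c) c \<Longrightarrow>
  runsF (exec (P ! pc c) c) k c' \<Longrightarrow> runsF c (Suc k) c'"
proof -
  assume a: "pc c < length P" "P ! pc c \<noteq> Halt" "wok (P ! pc c) c" "runsF (exec (P ! pc c) c) k c'"
  have st: "step P c = exec (P ! pc c) c" unfolding step_def halted_def using a by auto
  have fp: "(step P ^^ Suc j) c = (step P ^^ j) (step P c)" for j
    by (simp add: funpow_Suc_right del: funpow.simps)
  show ?thesis unfolding runsF_def
  proof
    assume bc: "bnd (mem c)"
    then have b2: "bnd (mem (exec (P ! pc c) c))" using wok_bnd a(3) by blast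
    then have r: "runs (exec (P ! pc c) c) k c'" using a(4) unfolding runsF_def by blast
    show "runs c (Suc k) c'" unfolding runs_def
    proof (intro conjI allI impI)
      show "(step P ^^ Suc k) c = c'" using r unfolding runs_def fp st by simp
      fix j assume "j \<le> Suc k"
      then show "bnd (mem ((step P ^^ j) c))"
      proof (cases j)
        case 0 then show ?thesis using bc by simp
      next
        case (Suc j')
        have "(step P ^^ j) c = (step P ^^ j') (exec (P ! pc c) c)" by (simp only: Suc fp st)
        then show ?thesis using r \<open>j \<le> Suc k\<close> Suc unfolding runs_def by simp
      qed
    qed
  qed
qed

lemma dat_lo: "a \<le> n \<Longrightarrow> dat (m(a := x)) = dat m"
proof -
  assume a: "a \<le> n"
  have ne0: "off v \<noteq> a" for v using off_ge_n[of v] a by simp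
  have ne1: "off v + 1 + k \<noteq> a" for v k using off_ge_n[of v] a by simp
  show ?thesis unfolding dat_def using ne0 ne1 by auto
qed

end

definition disp :: prog where
  "disp = [JumpZero 0 100, LoadConst 1 25, Sub 0 0 1, JumpPos 0 6, Add 0 0 1, Goto 101, Add 0 0 1, Goto 8]"
definition Pfull :: prog where "Pfull = disp @ gcode 8 2 @ gcode 101 676"
definition CC :: nat where "CC = 60000"

lemma length_Pfull: "length Pfull = 194" unfolding Pfull_def disp_def by simp

lemma Pfull_code1: "i < 93 \<Longrightarrow> Pfull ! (8 + i) = gcode 8 2 ! i"
  unfolding Pfull_def disp_def by (simp add: nth_append)
lemma Pfull_code2: "i < 93 \<Longrightarrow> Pfull ! (101 + i) = gcode 101 676 ! i"
  unfolding Pfull_def disp_def by (simp add: nth_append)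

lemma length_disp: "length disp = 8" unfolding disp_def by simp
lemma Pfull_disp: "i < 8 \<Longrightarrow> Pfull ! i = disp ! i"
  unfolding Pfull_def by (simp add: nth_append length_disp)

lemma E_bound:
  assumes va: "valid_adj adj"
  shows "offs adj (length adj) \<le> (length adj + 1)^2"
proof -
  let ?n = "length adj"
  have "sum_list (map (\<lambda>l. 1 + length l) adj) \<le> sum_list (map (\<lambda>l. 1 + ?n) adj)"
  proof (rule sum_list_mono)
    fix l assume "l \<in> set adj"
    then obtain v where "v < ?n" "l = adj ! v" by (metis in_set_conv_nth)
    then show "1 + length l \<le> 1 + ?n" using deg_le[OF va] by simp
  qed
  also have "\<dots> = ?n * (1 + ?n)" by (simp add: sum_list_triv)
  finally show ?thesis unfolding offs_def by (simp add: power2_eq_square algebra_simps)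
qed

lemma big_bound:
  assumes va: "valid_adj adj" and r: "r \<le> 676"
  shows "4 * int (offs adj (length adj) + r + 30) \<le> int ((length adj + 2) ^ CC)"
proof -
  let ?N = "length adj + 2"
  have E: "offs adj (length adj) \<le> ?N^2" using E_bound[OF va]
    by (metis add_le_mono1 le_trans one_le_numeral power_mono zero_le add_le_cancel_left)
  have N1: "1 \<le> ?N^2" by simp
  have "4 * (offs adj (length adj) + r + 30) \<le> 4 * ?N^2 + 2824" using E r by simp
  also have "\<dots> \<le> 2828 * ?N^2" using N1 by simp
  also have "\<dots> \<le> ?N^12 * ?N^2"
  proof -
    have "(2::nat)^12 \<le> ?N^12" by (rule power_mono) auto
    then show ?thesis by (intro mult_right_mono) auto
  qed
  also have "\<dots> = ?N^14" by (simp add: power_add[symmetric])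
  also have "\<dots> \<le> ?N^CC" by (rule power_increasing) (auto simp: CC_def)
  finally have "4 * (offs adj (length adj) + r + 30) \<le> ?N^CC" .
  then show ?thesis by (metis of_nat_le_iff of_nat_mult of_nat_numeral)
qed

lemma enc_bnd:
  assumes va: "valid_adj adj" and x: "x \<in> set (encode_adj adj)"
  shows "0 \<le> x \<and> x \<le> int (offs adj (length adj))"
proof -
  let ?n = "length adj" and ?E = "offs adj (length adj)"
  have nE: "?n \<le> ?E" using offs_ge[of adj ?n] by simp
  have offE: "v < ?n \<Longrightarrow> offs adj v \<le> ?E" for v using offs_mono[of v ?n adj] by simp
  consider "x = int ?n" | "x \<in> set (map int (list_offsets (1 + ?n) adj))"
    | "x \<in> set (concat (map (\<lambda>l. int (length l) # map int l) adj))"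
    using x unfolding encode_adj_def by auto
  then show ?thesis
  proof cases
    case 1 then show ?thesis using nE by simp
  next
    case 2
    then obtain v where v: "v < ?n" "x = int (list_offsets (1 + ?n) adj ! v)"
      by (auto simp: in_set_conv_nth)
    then have "x = int (offs adj v)" using list_offsets_nth[OF v(1)] unfolding offs_def by simp
    then show ?thesis using offE[OF v(1)] by simp
  next
    case 3
    then obtain l where l: "l \<in> set adj" "x \<in> set (int (length l) # map int l)" by auto
    then obtain v where v: "v < ?n" "l = adj ! v" by (metis in_set_conv_nth)
    have "length l \<le> ?n" using deg_le[OF va v(1)] v by simp
    moreover have "\<forall>y\<in>set l. y < ?n" using valid_facts(2)[OF va v(1)] v by auto
    ultimately show ?thesis using l(2) nE by auto
  qed
qed

lemma length_enc4: "length (enc4 xs) = 4 * length xs"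
  by (induction xs) (auto simp: enc4_def)
lemma quads_enc4: "quads (enc4 xs) = map (\<lambda>(a, b, c, d). (int a, int b, int c, int d)) xs"
  by (induction xs) (auto simp: enc4_def)

lemma lists_ok:
  assumes va: "valid_adj adj"
  shows "lists_all_4cycles adj (enc4 (outAll adj))"
  unfolding lists_all_4cycles_def
proof (intro conjI)
  show "4 dvd length (enc4 (outAll adj))" by (simp add: length_enc4)
  show "\<forall>(a, b, c, d)\<in>set (quads (enc4 (outAll adj))). 0 \<le> a \<and> 0 \<le> b \<and> 0 \<le> c \<and> 0 \<le> d \<and>
      is_4cycle (adj_edge adj) (nat a) (nat b) (nat c) (nat d)"
    unfolding quads_enc4 using outAll_sound[OF va] by auto
  show "four_cycles (adj_edge adj) \<subseteq> (\<lambda>(a, b, c, d). cyc_edges (nat a) (nat b) (nat c) (nat d)) ` set (quads (enc4 (outAll adj)))"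
  proof
    fix S assume "S \<in> four_cycles (adj_edge adj)"
    then obtain a b c d where S: "S = cyc_edges a b c d" "is_4cycle (adj_edge adj) a b c d"
      unfolding four_cycles_def by blast
    obtain x where x: "x \<in> set (outAll adj)" "S = (\<lambda>(a, b, c, d). cyc_edges a b c d) x"
      using outAll_complete[OF va S(2)] S(1) by auto
    show "S \<in> (\<lambda>(a, b, c, d). cyc_edges (nat a) (nat b) (nat c) (nat d)) ` set (quads (enc4 (outAll adj)))"
    proof -
      obtain a' b' c' d' where xe: "x = (a', b', c', d')" by (cases x) auto
      have "(int a', int b', int c', int d') \<in> set (map (\<lambda>(a, b, c, d). (int a, int b, int c, int d)) (outAll adj))"
        using x(1) xe by force
      moreover have "S = (\<lambda>(a, b, c, d). cyc_edges (nat a) (nat b) (nat c) (nat d)) (int a', int b', int c', int d')"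
        using x(2) xe by simp
      ultimately show ?thesis unfolding quads_enc4 by (rule rev_image_eqI)
    qed
  qed
qed


context gm begin

lemma init_dat: "dat (mem (init_conf adj))"
  unfolding dat_def
proof (intro allI impI conjI)
  fix v assume v: "v < n"
  have lt: "off v + 0 < length (encode_adj adj)" using off_lt_E[OF v, of 0] length_encode by simp
  show "mem (init_conf adj) (off v) = int (deg v)"
    using lt encode_nth[OF v, of 0] unfolding init_conf_def by simp
  fix j assume j: "j < deg v"
  have lt2: "off v + (1 + j) < length (encode_adj adj)" using off_lt_E[OF v, of "1 + j"] j length_encode by simp
  have "encode_adj adj ! (off v + (1 + j)) = int (adj ! v ! j)" using encode_nth[OF v, of "1 + j"] j by simp
  then show "mem (init_conf adj) (off v + 1 + j) = int (adj ! v ! j)"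
    using lt2 unfolding init_conf_def by (simp add: add.assoc)
qed

lemma init_bnd: "bnd (mem (init_conf adj))"
  unfolding bnd_def
proof
  fix a
  show "\<bar>mem (init_conf adj) a\<bar> \<le> B"
  proof (cases "a < length (encode_adj adj)")
    case True
    then have "encode_adj adj ! a \<in> set (encode_adj adj)" by simp
    then have "0 \<le> encode_adj adj ! a \<and> encode_adj adj ! a \<le> int E" using enc_bnd[OF va] by blast
    then show ?thesis using True Bbig unfolding init_conf_def by simp
  next
    case False
    then show ?thesis using Bbig unfolding init_conf_def by simp
  qed
qed

lemma init_0: "mem (init_conf adj) 0 = int n"
  unfolding init_conf_def encode_adj_def by simp

lemma init_eq: "init_conf adj = \<lparr>pc = 0, mem = mem (init_conf adj), outp = []\<rparr>"
  unfolding init_conf_def by simp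

lemma nB: "int n + 25 \<le> B" using Bbig n_lt_E by simp

lemma runsF_runs: "runsF c k c' \<Longrightarrow> bnd (mem c) \<Longrightarrow> runs c k c'" unfolding runsF_def by blast

end

lemma main_run:
  assumes va: "valid_adj adj"
  shows "\<exists>K c'. ((step Pfull ^^ K) (init_conf adj) = c'
       \<and> (\<forall>j\<le>K. \<forall>a. \<bar>mem ((step Pfull ^^ j) (init_conf adj)) a\<bar> \<le> int ((length adj + 2) ^ CC)))
     \<and> halted Pfull c' \<and> outp c' = enc4 (outAll adj) \<and> K \<le> costAll adj + 6"
proof -
  define B where "B = int ((length adj + 2) ^ CC)"
  let ?n = "length adj"
  let ?m0 = "mem (init_conf adj)"
  consider "?n = 0" | "1 \<le> ?n \<and> ?n \<le> 25" | "25 < ?n" by linarith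
  then have "\<exists>K c'. ((step Pfull ^^ K) (init_conf adj) = c'
       \<and> (\<forall>j\<le>K. \<forall>a. \<bar>mem ((step Pfull ^^ j) (init_conf adj)) a\<bar> \<le> B))
     \<and> halted Pfull c' \<and> outp c' = enc4 (outAll adj) \<and> K \<le> costAll adj + 6"
  proof cases
    case 1
    interpret G: gm adj Pfull 101 676 B
    proof
      show "676 + 25 \<le> ?n + 1 \<or> offs adj ?n \<le> 676" using 1 unfolding offs_def by simp
      show "4 * int (offs adj ?n + 676 + 30) \<le> B" unfolding B_def by (rule big_bound[OF va]) simp
    qed (use va length_Pfull Pfull_code2 in auto)
    have m00: "?m0 0 = 0" using G.init_0 1 by simp
    have r: "G.runsF \<lparr>pc = 0, mem = ?m0, outp = []\<rparr> (Suc 0) \<lparr>pc = 100, mem = ?m0, outp = []\<rparr>"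
      apply (rule G.runG)
      using m00 by (simp_all add: length_Pfull Pfull_disp disp_def G.runF0)
    have h: "halted Pfull \<lparr>pc = 100, mem = ?m0, outp = []\<rparr>"
      unfolding halted_def using Pfull_code1[of 92] by (simp add: gcode_def)
    have "outAll adj = []" using 1 unfolding outAll_def by simp
    then show ?thesis using G.runsF_runs[OF r] G.init_bnd G.init_eq[symmetric] h
      unfolding G.runs_def G.bnd_def by (intro exI[of _ "Suc 0"] exI[of _ "\<lparr>pc = 100, mem = ?m0, outp = []\<rparr>"]) auto
  next
    case 2
    interpret G: gm adj Pfull 101 676 B
    proof
      have "offs adj ?n \<le> (?n + 1)^2" by (rule E_bound[OF va])
      also have "\<dots> \<le> 26^2" using 2 by (intro power_mono) auto
      finally show "676 + 25 \<le> ?n + 1 \<or> offs adj ?n \<le> 676" by simp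
      show "4 * int (offs adj ?n + 676 + 30) \<le> B" unfolding B_def by (rule big_bound[OF va]) simp
    qed (use va length_Pfull Pfull_code2 in auto)
    have m00: "?m0 0 = int ?n" using G.init_0 by simp
    have d0: "G.dat ?m0" using G.init_dat .
    note nB = G.nB
    have ne: "adj \<noteq> []" "1 \<le> ?n" using 2 by auto
    have "\<exists>k m'. G.runsF \<lparr>pc = 0, mem = ?m0, outp = []\<rparr> k \<lparr>pc = 101, mem = m', outp = []\<rparr> \<and> k \<le> 6
       \<and> m' 0 = int ?n \<and> G.dat m'"
      using m00 d0 nB 2 ne
      apply (intro exI conjI)
    apply (rule G.runG)
       apply (simp add: length_Pfull)
      apply (simp add: Pfull_disp disp_def)
     apply (simp add: Pfull_disp disp_def abs_le_iff)
    apply (simp add: Pfull_disp disp_def)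
    apply (rule G.runG)
       apply (simp add: length_Pfull)
      apply (simp add: Pfull_disp disp_def)
     apply (simp add: Pfull_disp disp_def abs_le_iff)
    apply (simp add: Pfull_disp disp_def)
    apply (rule G.runG)
       apply (simp add: length_Pfull)
      apply (simp add: Pfull_disp disp_def)
     apply (simp add: Pfull_disp disp_def abs_le_iff)
    apply (simp add: Pfull_disp disp_def)
    apply (rule G.runG)
       apply (simp add: length_Pfull)
      apply (simp add: Pfull_disp disp_def)
     apply (simp add: Pfull_disp disp_def abs_le_iff)
    apply (simp add: Pfull_disp disp_def)
    apply (rule G.runG)
       apply (simp add: length_Pfull)
      apply (simp add: Pfull_disp disp_def)
     apply (simp add: Pfull_disp disp_def abs_le_iff)
    apply (simp add: Pfull_disp disp_def)
    apply (rule G.runG)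
       apply (simp add: length_Pfull)
      apply (simp add: Pfull_disp disp_def)
     apply (simp add: Pfull_disp disp_def abs_le_iff)
    apply (simp add: Pfull_disp disp_def)
      apply (rule G.runF0)
      apply (simp_all add: G.dat_lo)
      done
    then obtain k1 m1 where d: "G.runsF \<lparr>pc = 0, mem = ?m0, outp = []\<rparr> k1 \<lparr>pc = 101, mem = m1, outp = []\<rparr>"
      "k1 \<le> 6" "m1 0 = int ?n" "G.dat m1" by blast
    obtain k2 m2 where g: "G.runsF \<lparr>pc = 101, mem = m1, outp = []\<rparr> k2 \<lparr>pc = 101 + 92, mem = m2, outp = [] @ enc4 (outAll adj)\<rparr>"
      "k2 \<le> costAll adj" using G.gen_run[OF d(3,4), of "[]"] by blast
    have h: "halted Pfull \<lparr>pc = 101 + 92, mem = m2, outp = [] @ enc4 (outAll adj)\<rparr>"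
      unfolding halted_def using Pfull_code2[of 92] by (simp add: gcode_def)
    have r: "G.runs (init_conf adj) (k1 + k2) \<lparr>pc = 101 + 92, mem = m2, outp = [] @ enc4 (outAll adj)\<rparr>"
      using G.runsF_runs[OF G.runsF_trans[OF d(1) g(1)]] G.init_bnd G.init_eq[symmetric] by simp
    show ?thesis using r h d(2) g(2) unfolding G.runs_def G.bnd_def
      by (intro exI[of _ "k1 + k2"] exI[of _ "\<lparr>pc = 101 + 92, mem = m2, outp = [] @ enc4 (outAll adj)\<rparr>"]) auto
  next
    case 3
    interpret G: gm adj Pfull 8 2 B
    proof
      show "2 + 25 \<le> ?n + 1 \<or> offs adj ?n \<le> 2" using 3 by simp
      show "4 * int (offs adj ?n + 2 + 30) \<le> B" unfolding B_def by (rule big_bound[OF va]) simp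
    qed (use va length_Pfull Pfull_code1 in auto)
    have m00: "?m0 0 = int ?n" using G.init_0 by simp
    have d0: "G.dat ?m0" using G.init_dat .
    note nB = G.nB
    have ne: "adj \<noteq> []" "1 \<le> ?n" using 3 by auto
    have "\<exists>k m'. G.runsF \<lparr>pc = 0, mem = ?m0, outp = []\<rparr> k \<lparr>pc = 8, mem = m', outp = []\<rparr> \<and> k \<le> 6
       \<and> m' 0 = int ?n \<and> G.dat m'"
      using m00 d0 nB 3 ne
      apply (intro exI conjI)
    apply (rule G.runG)
       apply (simp add: length_Pfull)
      apply (simp add: Pfull_disp disp_def)
     apply (simp add: Pfull_disp disp_def abs_le_iff)
    apply (simp add: Pfull_disp disp_def)
    apply (rule G.runG)
       apply (simp add: length_Pfull)
      apply (simp add: Pfull_disp disp_def)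
     apply (simp add: Pfull_disp disp_def abs_le_iff)
    apply (simp add: Pfull_disp disp_def)
    apply (rule G.runG)
       apply (simp add: length_Pfull)
      apply (simp add: Pfull_disp disp_def)
     apply (simp add: Pfull_disp disp_def abs_le_iff)
    apply (simp add: Pfull_disp disp_def)
    apply (rule G.runG)
       apply (simp add: length_Pfull)
      apply (simp add: Pfull_disp disp_def)
     apply (simp add: Pfull_disp disp_def abs_le_iff)
    apply (simp add: Pfull_disp disp_def)
    apply (rule G.runG)
       apply (simp add: length_Pfull)
      apply (simp add: Pfull_disp disp_def)
     apply (simp add: Pfull_disp disp_def abs_le_iff)
    apply (simp add: Pfull_disp disp_def)
    apply (rule G.runG)
       apply (simp add: length_Pfull)
      apply (simp add: Pfull_disp disp_def)
     apply (simp add: Pfull_disp disp_def abs_le_iff)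
    apply (simp add: Pfull_disp disp_def)
      apply (rule G.runF0)
      apply (simp_all add: G.dat_lo)
      done
    then obtain k1 m1 where d: "G.runsF \<lparr>pc = 0, mem = ?m0, outp = []\<rparr> k1 \<lparr>pc = 8, mem = m1, outp = []\<rparr>"
      "k1 \<le> 6" "m1 0 = int ?n" "G.dat m1" by blast
    obtain k2 m2 where g: "G.runsF \<lparr>pc = 8, mem = m1, outp = []\<rparr> k2 \<lparr>pc = 8 + 92, mem = m2, outp = [] @ enc4 (outAll adj)\<rparr>"
      "k2 \<le> costAll adj" using G.gen_run[OF d(3,4), of "[]"] by blast
    have h: "halted Pfull \<lparr>pc = 8 + 92, mem = m2, outp = [] @ enc4 (outAll adj)\<rparr>"
      unfolding halted_def using Pfull_code1[of 92] by (simp add: gcode_def)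
    have r: "G.runs (init_conf adj) (k1 + k2) \<lparr>pc = 8 + 92, mem = m2, outp = [] @ enc4 (outAll adj)\<rparr>"
      using G.runsF_runs[OF G.runsF_trans[OF d(1) g(1)]] G.init_bnd G.init_eq[symmetric] by simp
    show ?thesis using r h d(2) g(2) unfolding G.runs_def G.bnd_def
      by (intro exI[of _ "k1 + k2"] exI[of _ "\<lparr>pc = 8 + 92, mem = m2, outp = [] @ enc4 (outAll adj)\<rparr>"]) auto
  qed
  then show ?thesis unfolding B_def .
qed


lemma halted_fix: "halted P c \<Longrightarrow> (step P ^^ j) c = c"
  by (induction j) (auto simp: step_def)

theorem mainTheorem2:
  shows "\<exists>(P :: prog) (C :: nat). \<forall>adj. valid_adj adj \<longrightarrow>
     (let n = length adj; t = card (four_cycles (adj_edge adj)) in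
       (\<exists>k. halted P ((step P ^^ k) (init_conf adj))
            \<and> k \<le> C * (n ^ 2 + t) + C
            \<and> lists_all_4cycles adj (outp ((step P ^^ k) (init_conf adj))))
       \<and> (\<forall>k a. \<bar>mem ((step P ^^ k) (init_conf adj)) a\<bar> \<le> int ((n + 2) ^ C)))"
proof (intro exI allI impI)
  fix adj assume va: "valid_adj adj"
  let ?n = "length adj" and ?t = "card (four_cycles (adj_edge adj))"
  let ?B = "int ((length adj + 2) ^ CC)"
  obtain K c' where R: "(step Pfull ^^ K) (init_conf adj) = c'
       \<and> (\<forall>j\<le>K. \<forall>a. \<bar>mem ((step Pfull ^^ j) (init_conf adj)) a\<bar> \<le> ?B)" "halted Pfull c'"
    "outp c' = enc4 (outAll adj)" "K \<le> costAll adj + 6"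
    using main_run[OF va] by blast
  have run: "(step Pfull ^^ K) (init_conf adj) = c'"
    and bd: "\<And>j a. j \<le> K \<Longrightarrow> \<bar>mem ((step Pfull ^^ j) (init_conf adj)) a\<bar> \<le> ?B"
    using R(1) by auto
  have cost: "K \<le> CC * (?n ^ 2 + ?t) + CC"
  proof -
    have "K \<le> 200 * (?n ^ 2 + length (outAll adj)) + 56" using R(4) costAll_bound[OF va] by simp
    also have "\<dots> \<le> 200 * (?n ^ 2 + 256 * ?t) + 56" using length_outAll[OF va] by simp
    also have "\<dots> \<le> CC * (?n ^ 2 + ?t) + CC" unfolding CC_def by simp
    finally show ?thesis .
  qed
  have allb: "\<bar>mem ((step Pfull ^^ k) (init_conf adj)) a\<bar> \<le> ?B" for k a
  proof (cases "k \<le> K")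
    case True then show ?thesis using bd[OF True] by blast
  next
    case False
    have "(step Pfull ^^ k) (init_conf adj) = (step Pfull ^^ (k - K)) ((step Pfull ^^ K) (init_conf adj))"
      using False by (metis funpow_add le_add_diff_inverse nat_le_linear o_apply add.commute)
    also have "\<dots> = c'" using run halted_fix[OF R(2)] by simp
    finally show ?thesis using bd[of K a] run by simp
  qed
  show "let n = ?n; t = ?t in
       (\<exists>k. halted Pfull ((step Pfull ^^ k) (init_conf adj))
            \<and> k \<le> CC * (n ^ 2 + t) + CC
            \<and> lists_all_4cycles adj (outp ((step Pfull ^^ k) (init_conf adj))))
       \<and> (\<forall>k a. \<bar>mem ((step Pfull ^^ k) (init_conf adj)) a\<bar> \<le> int ((n + 2) ^ CC))"
    unfolding Let_def using run R(2,3) cost allb lists_ok[OF va]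
    by (intro conjI exI[of _ K]) auto
qed

end
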